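(* Let $\alpha\ge1$ and $p$ be integers with $1\le p\le\alpha^2$, and let $c$ be real with $1\le c\le p\gamma/\alpha$. Then, as $r\to\infty$, $$n_{c,r}^{-1}|S_p\cap[n_{c,r}]|=\tfrac12 c^{-1}\left(1-(\alpha\gamma)^{-1}p\right)^2+O(\gamma^{-r}).$$ In particular, for $p=\alpha^2$ and $1\le c\le\alpha\gamma$, $$n_{c,r}^{-1}|S_p\cap[n_{c,r}]|=\tfrac12c^{-1}\gamma^{-4}+O(\gamma^{-r}).$$
   Context: Here $\beta=1$. For a positive integer $\alpha$ and positive integers $a_1,a_2$, the $(\alpha,1)$-walk $w_k(a_1,a_2)$ is given by $w_1=a_1$, $w_2=a_2$, $w_{k+2}=\alpha w_{k+1}+w_k$ ($k\ge1$). For a positive integer $n$, $s(n;a_1,a_2)$ is the (largest) index $s$ with $w_s(a_1,a_2)=n$ ($-\infty$ if none), and $s(n)=\max_{a_1,a_2\ge1}s(n;a_1,a_2)$. A pair of positive integers $(a_1,a_2)$ is $n$-good if $s(n;a_1,a_2)=s(n)$; $p(n)$ is the number of $n$-good pairs (possibly infinite). $S_p=\{m\ge1:p(m)>p\}$. Let $\gamma=\frac12(\alpha+\sqrt{\alpha^2+4})$, $\lambda=\frac12(\alpha-\sqrt{\alpha^2+4})$, and $n_{c,r}=\left\lfloor\frac{c}{(\gamma-\lambda)^2}\gamma^{2r+1}\right\rfloor$. $[N]=\{1,\dots,N\}$. *)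

theory Defs
  imports "HOL-Analysis.Analysis" "HOL-Library.Extended_Nat" "HOL-Library.Landau_Symbols"
begin

text \<open>The (alpha,1)-walk, indexed from 1: walk al a b 1 = a, walk al a b 2 = b,
  w(k+2) = al * w(k+1) + w(k). The value at index 0 is irrelevant (set to 0).\<close>
fun walk :: "nat \<Rightarrow> nat \<Rightarrow> nat \<Rightarrow> nat \<Rightarrow> nat" where
  "walk al a b 0 = 0"
| "walk al a b (Suc 0) = a"
| "walk al a b (Suc (Suc 0)) = b"
| "walk al a b (Suc (Suc (Suc k))) = al * walk al a b (Suc (Suc k)) + walk al a b (Suc k)"

text \<open>s(n;a1,a2): largest index s >= 1 with w_s = n; None encodes minus infinity.\<close>
definition sidx :: "nat \<Rightarrow> nat \<Rightarrow> nat \<Rightarrow> nat \<Rightarrow> nat option" where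
  "sidx al n a b = (if {k. 1 \<le> k \<and> walk al a b k = n} = {} then None
                    else Some (Max {k. 1 \<le> k \<and> walk al a b k = n}))"

text \<open>s(n) = max over positive a1,a2 of s(n;a1,a2) (always >= 1 since w_1 = a1).\<close>
definition smax :: "nat \<Rightarrow> nat \<Rightarrow> nat" where
  "smax al n = Max {k. 1 \<le> k \<and> (\<exists>a b. 1 \<le> a \<and> 1 \<le> b \<and> walk al a b k = n)}"

definition good_pairs :: "nat \<Rightarrow> nat \<Rightarrow> (nat \<times> nat) set" where
  "good_pairs al n = {(a, b). 1 \<le> a \<and> 1 \<le> b \<and> sidx al n a b = Some (smax al n)}"

definition pcount :: "nat \<Rightarrow> nat \<Rightarrow> enat" where
  "pcount al n = (if finite (good_pairs al n) then enat (card (good_pairs al n)) else \<infinity>)"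

definition Sp :: "nat \<Rightarrow> nat \<Rightarrow> nat set" where
  "Sp al p = {m. 1 \<le> m \<and> pcount al m > enat p}"

definition gam :: "nat \<Rightarrow> real" where
  "gam al = (real al + sqrt (real al ^ 2 + 4)) / 2"

definition lam :: "nat \<Rightarrow> real" where
  "lam al = (real al - sqrt (real al ^ 2 + 4)) / 2"

definition ncr :: "nat \<Rightarrow> real \<Rightarrow> nat \<Rightarrow> nat" where
  "ncr al c r = nat \<lfloor>c / (gam al - lam al)^2 * gam al ^ (2 * r + 1)\<rfloor>"

end

theory Submission
  imports Defs
begin

fun G :: "nat \<Rightarrow> nat \<Rightarrow> nat" where
  "G al 0 = 0"
| "G al (Suc 0) = 1"
| "G al (Suc (Suc k)) = al * G al (Suc k) + G al k"

lemma walk_G: "walk al a b (Suc (Suc k)) = G al k * a + G al (Suc k) * b"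
proof (induction k rule: less_induct)
  case (less k)
  show ?case
  proof (cases k)
    case 0 then show ?thesis by simp
  next
    case (Suc j)
    show ?thesis
    proof (cases j)
      case 0 then show ?thesis using Suc by simp
    next
      case (Suc i)
      have h1: "walk al a b (Suc (Suc i)) = G al i * a + G al (Suc i) * b" using less.IH[of i] Suc \<open>k = Suc j\<close> by simp
      have h2: "walk al a b (Suc (Suc (Suc i))) = G al (Suc i) * a + G al (Suc (Suc i)) * b" using less.IH[of "Suc i"] Suc \<open>k = Suc j\<close> by blast
      have h3: "walk al a b (Suc (Suc (Suc (Suc i)))) = al * walk al a b (Suc (Suc (Suc i))) + walk al a b (Suc (Suc i))"
        by (rule walk.simps(4))
      have h4: "G al (Suc (Suc (Suc i))) = al * G al (Suc (Suc i)) + G al (Suc i)" by (rule G.simps(3))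
      have h5: "G al (Suc (Suc i)) = al * G al (Suc i) + G al i" by (rule G.simps(3))
      show ?thesis unfolding Suc \<open>k = Suc j\<close> h3 h1 h2 h4 h5 by (simp add: algebra_simps)
    qed
  qed
qed

lemma G_pos: "1 \<le> k \<Longrightarrow> 1 \<le> al \<Longrightarrow> 1 \<le> G al k"
proof (induction al k rule: G.induct)
  case (3 al k) then show ?case by (cases k) auto
qed auto

lemma G_ge_lin: "1 \<le> al \<Longrightarrow> k \<le> G al (Suc k)"
proof (induction al k rule: G.induct)
  case (1 al) then show ?case by simp
next
  case (2 al) then show ?case by simp
next
  case (3 al k)
  have "G al (Suc (Suc (Suc k))) = al * G al (Suc (Suc k)) + G al (Suc k)" by simp
  moreover have "al * G al (Suc (Suc k)) \<ge> G al (Suc (Suc k))" using 3 by simp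
  moreover have "G al (Suc k) \<ge> 1" using G_pos 3 by simp
  ultimately show ?case using 3 by linarith
qed

lemma G_step_ge: "al * G al (Suc k) \<le> G al (Suc (Suc k))" by simp

lemma G_mono_Suc: assumes "1 \<le> al" shows "G al k \<le> G al (Suc k)"
proof (cases k)
  case 0 then show ?thesis by simp
next
  case (Suc j)
  have "G al (Suc j) \<le> al * G al (Suc j)" using mult_le_mono1[OF assms, of "G al (Suc j)"] by simp
  then show ?thesis using Suc by (metis G.simps(3) trans_le_add1)
qed

lemma G_mono: assumes "1 \<le> al" "i \<le> k" shows "G al i \<le> G al k"
  using assms(2) by (induction k rule: dec_induct) (auto intro: order.trans G_mono_Suc[OF assms(1)])

lemma G_coprime: "coprime (G al k) (G al (Suc k))"
proof (induction k)
  case 0 then show ?case by simp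
next
  case (Suc k)
  have "gcd (G al (Suc k)) (al * G al (Suc k) + G al k) = gcd (G al (Suc k)) (G al k)"
    by (rule gcd_add_mult)
  then show ?case using Suc by (simp add: coprime_iff_gcd_eq_1 gcd.commute)
qed

lemma walk_shift: "walk al x y (Suc (Suc (Suc k))) = walk al y (al * y + x) (Suc (Suc k))"
  by (simp add: walk_G algebra_simps)

lemma sol_struct:
  assumes al: "1 \<le> al" and "G al k * x + G al (Suc k) * y = G al k * x' + G al (Suc k) * y'"
  shows "\<exists>t::int. int x' = int x + t * int (G al (Suc k)) \<and> int y' = int y - t * int (G al k)"
proof -
  let ?A = "int (G al k)" and ?B = "int (G al (Suc k))"
  have e: "?A * (int x' - int x) = ?B * (int y - int y')"
    using arg_cong[OF assms(2), of int] by (simp add: algebra_simps)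
  have cop: "coprime ?B ?A" using G_coprime[of al k] by (simp add: coprime_commute)
  have "?B dvd ?A * (int x' - int x)" using e by simp
  then have "?B dvd (int x' - int x)" using cop coprime_dvd_mult_right_iff by blast
  then obtain t where t: "int x' - int x = ?B * t" by (auto elim: dvdE)
  show ?thesis
  proof (cases "?B = 0")
    case True
    then have "G al (Suc k) = 0" by simp
    then show ?thesis using G_pos[of "Suc k" al] al by simp
  next
    case False
    have "?B * (?A * t) = ?B * (int y - int y')" using e t by (simp add: algebra_simps)
    then have "?A * t = int y - int y'" using False by simp
    then show ?thesis using t by (intro exI[of _ t]) (auto simp: algebra_simps)
  qed
qed

lemma walk_index_bound:
  assumes al: "1 \<le> al" and "1 \<le> b" and "walk al a b k = n"
  shows "k \<le> n + 2"
proof (cases k)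
  case 0 then show ?thesis by simp
next
  case (Suc i)
  show ?thesis
  proof (cases i)
    case 0 then show ?thesis using Suc by simp
  next
    case (Suc j)
    have "n = G al j * a + G al (Suc j) * b" using assms(3) \<open>k = Suc i\<close> Suc walk_G by simp
    moreover have "G al (Suc j) * 1 \<le> G al (Suc j) * b" using assms(2) by (rule mult_le_mono2)
    ultimately have "G al (Suc j) \<le> n" by linarith
    then show ?thesis using G_ge_lin[OF al, of j] \<open>k = Suc i\<close> Suc by simp
  qed
qed

definition SS :: "nat \<Rightarrow> nat \<Rightarrow> nat set" where
  "SS al n = {k. 1 \<le> k \<and> (\<exists>a b. 1 \<le> a \<and> 1 \<le> b \<and> walk al a b k = n)}"

lemma SS_finite: assumes al: "1 \<le> al" shows "finite (SS al n)"
proof (rule finite_subset[of _ "{..n+2}"])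
  show "SS al n \<subseteq> {..n+2}"
  proof
    fix k assume "k \<in> SS al n"
    then obtain a b where "1 \<le> b" "walk al a b k = n" by (auto simp: SS_def)
    then show "k \<in> {..n+2}" using walk_index_bound[OF al] by simp
  qed
qed simp

lemma SS_one: "1 \<le> n \<Longrightarrow> 1 \<in> SS al n"
  unfolding SS_def by (auto intro!: exI[of _ n] exI[of _ 1])

lemma smax_in: "1 \<le> al \<Longrightarrow> 1 \<le> n \<Longrightarrow> smax al n \<in> SS al n"
  unfolding smax_def SS_def[symmetric] using SS_finite SS_one by (metis Max_in empty_iff)

lemma smax_ge: "1 \<le> al \<Longrightarrow> k \<in> SS al n \<Longrightarrow> k \<le> smax al n"
  unfolding smax_def SS_def[symmetric] using SS_finite by (metis Max_ge)

definition Lset :: "nat \<Rightarrow> nat \<Rightarrow> nat \<Rightarrow> (nat \<times> nat) set" where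
  "Lset al n k = {(a, b). 1 \<le> a \<and> 1 \<le> b \<and> walk al a b k = n}"

lemma good_char:
  assumes al: "1 \<le> al" and n: "1 \<le> n"
  shows "good_pairs al n = Lset al n (smax al n)"
proof (intro set_eqI iffI)
  fix z assume z: "z \<in> good_pairs al n"
  obtain a b where zab: "z = (a, b)" by (cases z)
  let ?K = "{k. 1 \<le> k \<and> walk al a b k = n}"
  have a: "1 \<le> a" "1 \<le> b" and sid: "sidx al n a b = Some (smax al n)"
    using z zab by (auto simp: good_pairs_def)
  have ne: "?K \<noteq> {}" and mx: "Max ?K = smax al n"
    using sid unfolding sidx_def by (auto split: if_splits)
  have fin: "finite ?K"
    by (rule finite_subset[of _ "{..n+2}"]) (use a al walk_index_bound in auto)
  have "Max ?K \<in> ?K" using Max_in[OF fin ne] .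
  then show "z \<in> Lset al n (smax al n)" using mx a zab by (simp add: Lset_def)
next
  fix z assume z: "z \<in> Lset al n (smax al n)"
  obtain a b where zab: "z = (a, b)" by (cases z)
  let ?K = "{k. 1 \<le> k \<and> walk al a b k = n}"
  have a: "1 \<le> a" "1 \<le> b" and w: "walk al a b (smax al n) = n"
    using z zab by (auto simp: Lset_def)
  have s1: "1 \<le> smax al n" using smax_in[OF al n] by (simp add: SS_def)
  have fin: "finite ?K"
    by (rule finite_subset[of _ "{..n+2}"]) (use a al walk_index_bound in auto)
  have inK: "smax al n \<in> ?K" using s1 w by simp
  then have ne: "?K \<noteq> {}" by blast
  have "Max ?K \<in> ?K" using Max_in[OF fin ne] .
  then have "Max ?K \<in> SS al n" using a unfolding SS_def by blast
  then have "Max ?K \<le> smax al n" using smax_ge[OF al] by blast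
  moreover have "smax al n \<le> Max ?K" using Max_ge[OF fin inK] .
  ultimately have "Max ?K = smax al n" by simp
  then show "z \<in> good_pairs al n" using ne a zab unfolding good_pairs_def sidx_def by simp
qed

lemma Lset_finite:
  assumes al: "1 \<le> al" shows "finite (Lset al n (Suc (Suc (Suc j))))"
proof -
  have "Lset al n (Suc (Suc (Suc j))) \<subseteq> {..n} \<times> {..n}"
  proof
    fix z assume "z \<in> Lset al n (Suc (Suc (Suc j)))"
    then obtain a b where z: "z = (a,b)" "1 \<le> a" "1 \<le> b" "G al (Suc j) * a + G al (Suc (Suc j)) * b = n"
      by (auto simp: Lset_def walk_G)
    have h1: "1 * a \<le> G al (Suc j) * a" using G_pos[OF _ al, of "Suc j"] by (intro mult_le_mono1) simp
    have h2: "1 * b \<le> G al (Suc (Suc j)) * b" using G_pos[OF _ al, of "Suc (Suc j)"] by (intro mult_le_mono1) simp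
    have "a \<le> n" "b \<le> n" using h1 h2 z(4) by linarith+
    then show "z \<in> {..n} \<times> {..n}" using z(1) by auto
  qed
  then show ?thesis by (rule finite_subset) simp
qed

lemma walk_shift_many:
  assumes al: "1 \<le> al"
  shows "1 \<le> x \<Longrightarrow> 1 \<le> y \<Longrightarrow> \<exists>x' y'. 1 \<le> x' \<and> 1 \<le> y' \<and>
    walk al x y (Suc (Suc (Suc j)) + d) = walk al x' y' (Suc (Suc (Suc j)))"
proof (induction d arbitrary: x y)
  case 0 then show ?case by auto
next
  case (Suc d)
  have "walk al x y (Suc (Suc (Suc j)) + Suc d) = walk al y (al * y + x) (Suc (Suc (Suc j)) + d)"
    using walk_shift[of al x y "Suc j + d"] by simp
  moreover have "1 \<le> al * y + x" using Suc by simp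
  ultimately show ?case using Suc.IH[of y "al * y + x"] Suc.prems by metis
qed

definition Dset :: "nat \<Rightarrow> nat \<Rightarrow> nat \<Rightarrow> (nat \<times> nat) set" where
  "Dset al p j = {(a, b). 1 \<le> a \<and> a \<le> G al (Suc j) \<and> p * G al j < b \<and> b \<le> al * a}"

definition Phi :: "nat \<Rightarrow> nat \<Rightarrow> nat \<times> nat \<Rightarrow> nat" where
  "Phi al j z = G al j * fst z + G al (Suc j) * snd z"

lemma no_higher:
  assumes al: "1 \<le> al" and j: "1 \<le> j"
    and a: "1 \<le> a" "a \<le> G al (Suc j)" "b \<le> al * a"
    and n: "n = G al j * a + G al (Suc j) * b"
    and k: "Suc (Suc (Suc j)) \<le> k" and xy: "1 \<le> x" "1 \<le> y" and w: "walk al x y k = n"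
  shows False
proof -
  obtain d where kd: "k = Suc (Suc (Suc j)) + d" using k le_Suc_ex by blast
  obtain x' y' where xy': "1 \<le> x'" "1 \<le> y'" "walk al x y k = walk al x' y' (Suc (Suc (Suc j)))"
    using walk_shift_many[OF al xy, of j d] kd by blast
  have "n = walk al y' (al * y' + x') (Suc (Suc j))" using w xy'(3) walk_shift[of al x' y' j] by simp
  then have e: "G al j * a + G al (Suc j) * b = G al j * y' + G al (Suc j) * (al * y' + x')"
    using n by (simp add: walk_G)
  obtain t :: int where t: "int y' = int a + t * int (G al (Suc j))"
      "int (al * y' + x') = int b - t * int (G al j)"
    using sol_struct[OF al e] by blast
  show False
  proof (cases "t \<ge> 0")
    case True
    have "0 \<le> t * int (G al j)" using True by simp
    moreover have "0 \<le> t * int (G al (Suc j))" using True by simp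
    ultimately have "y' \<ge> a" "al * y' + x' \<le> b" using t by linarith+
    then have "al * a \<le> al * y'" by simp
    then show False using \<open>al * y' + x' \<le> b\<close> a(3) xy'(1) by linarith
  next
    case False
    then have "t \<le> -1" by simp
    then have "t * int (G al (Suc j)) \<le> -1 * int (G al (Suc j))"
      by (intro mult_right_mono) auto
    then show False using t(1) a(2) xy'(2) by linarith
  qed
qed

lemma level_smax:
  assumes al: "1 \<le> al" and j: "1 \<le> j" and a: "1 \<le> a" "a \<le> G al (Suc j)" "1 \<le> b" "b \<le> al * a"
    and n: "n = G al j * a + G al (Suc j) * b"
  shows "smax al n = Suc (Suc j)"
proof -
  have B1: "1 \<le> G al (Suc j)" using G_pos[OF _ al] by simp
  have "1 * 1 \<le> G al (Suc j) * b" using B1 a(3) by (rule mult_le_mono)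
  then have n1: "1 \<le> n" using n by linarith
  have "Suc (Suc j) \<in> SS al n" unfolding SS_def using a n by (auto simp: walk_G)
  then have ge: "Suc (Suc j) \<le> smax al n" using smax_ge[OF al] by blast
  have "smax al n \<in> SS al n" using smax_in[OF al n1] .
  then obtain x y where xy: "1 \<le> x" "1 \<le> y" "walk al x y (smax al n) = n" by (auto simp: SS_def)
  show ?thesis
  proof (rule ccontr)
    assume "smax al n \<noteq> Suc (Suc j)"
    then have "Suc (Suc (Suc j)) \<le> smax al n" using ge by simp
    then show False using no_higher[OF al j a(1,2,4) n _ xy] by blast
  qed
qed

lemma in_Sp:
  assumes al: "1 \<le> al" and j: "1 \<le> j" and ab: "(a, b) \<in> Dset al p j"
  shows "Phi al j (a, b) \<in> Sp al p"
proof -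
  let ?A = "G al j" and ?B = "G al (Suc j)"
  define n where "n = Phi al j (a, b)"
  have a: "1 \<le> a" "a \<le> ?B" "p * ?A < b" "b \<le> al * a" using ab by (auto simp: Dset_def)
  have A1: "1 \<le> ?A" using G_pos[OF j al] .
  have B1: "1 \<le> ?B" using G_pos[OF _ al] by simp
  have nn: "n = ?A * a + ?B * b" by (simp add: n_def Phi_def)
  have "1 * 1 \<le> ?B * b" using B1 a(3) by (intro mult_le_mono) auto
  then have n1: "1 \<le> n" using nn by linarith
  have sm: "smax al n = Suc (Suc j)" using level_smax[OF al j a(1,2) _ a(4) nn] a(3) by simp
  obtain i where ji: "j = Suc i" using j by (cases j) auto
  have gp: "good_pairs al n = Lset al n (Suc (Suc j))" using good_char[OF al n1] sm by simp
  have fin: "finite (Lset al n (Suc (Suc j)))" using Lset_finite[OF al, of n i] ji by simp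
  define f where "f t = (a + t * ?B, b - t * ?A)" for t
  have sub: "f ` {0..p} \<subseteq> Lset al n (Suc (Suc j))"
  proof
    fix z assume "z \<in> f ` {0..p}"
    then obtain t where t: "t \<le> p" "z = f t" by auto
    have "t * ?A \<le> p * ?A" using t(1) by simp
    then have tb: "t * ?A < b" using a(3) by linarith
    have "int (?A * (a + t * ?B) + ?B * (b - t * ?A)) = int (?A * a + ?B * b)"
      using tb by (simp add: of_nat_diff algebra_simps)
    then have "?A * (a + t * ?B) + ?B * (b - t * ?A) = n" using nn by linarith
    then show "z \<in> Lset al n (Suc (Suc j))" using t tb a(1)
      by (auto simp: Lset_def f_def walk_G)
  qed
  have inj: "inj_on f {0..p}"
    by (rule inj_onI) (use B1 in \<open>auto simp: f_def\<close>)
  have "card (f ` {0..p}) = p + 1" using card_image[OF inj] by simp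
  then have "p + 1 \<le> card (Lset al n (Suc (Suc j)))" using card_mono[OF fin sub] by simp
  then have "pcount al n > enat p" using fin gp by (simp add: pcount_def)
  then show ?thesis using n1 by (simp add: Sp_def n_def)
qed

lemma from_Sp:
  assumes al: "1 \<le> al" and nS: "n \<in> Sp al p" and nal: "al < n"
  shows "\<exists>j a b. 1 \<le> j \<and> (a, b) \<in> Dset al p j \<and> n = Phi al j (a, b)"
proof -
  have n1: "1 \<le> n" and pc: "pcount al n > enat p" using nS by (auto simp: Sp_def)
  have "walk al (n - al) 1 3 = n" using nal by (simp add: numeral_eq_Suc walk_G)
  then have "1 \<le> n - al \<and> 1 \<le> (1::nat) \<and> walk al (n - al) 1 3 = n" using nal by simp
  moreover have "(1::nat) \<le> 3" by simp
  ultimately have "3 \<in> SS al n" unfolding SS_def by blast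
  then have s3: "3 \<le> smax al n" using smax_ge[OF al] by blast
  then have "\<exists>i. smax al n = Suc (Suc (Suc i))"
    by (intro exI[of _ "smax al n - 3"]) (simp add: numeral_eq_Suc)
  then obtain i where si: "smax al n = Suc (Suc (Suc i))" by blast
  define j where "j = Suc i"
  let ?A = "G al j" and ?B = "G al (Suc j)"
  have j: "1 \<le> j" by (simp add: j_def)
  have A1: "1 \<le> ?A" using G_pos[OF j al] .
  have B1: "1 \<le> ?B" using G_pos[OF _ al] by simp
  define L where "L = Lset al n (smax al n)"
  have gp: "good_pairs al n = L" using good_char[OF al n1] by (simp add: L_def)
  have fin: "finite L" using Lset_finite[OF al, of n i] si by (simp add: L_def)
  have cL: "p < card L" using pc fin gp by (simp add: pcount_def)
  then have Lne: "L \<noteq> {}" by auto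
  have Lmem: "(x, y) \<in> L \<longleftrightarrow> 1 \<le> x \<and> 1 \<le> y \<and> ?A * x + ?B * y = n" for x y
    by (simp add: L_def Lset_def si j_def walk_G)
  define a where "a = Min (fst ` L)"
  have "a \<in> fst ` L" unfolding a_def using fin Lne by (intro Min_in) auto
  then obtain b where ab: "(a, b) \<in> L" by force
  have amin: "a \<le> x" if "(x, y) \<in> L" for x y
    unfolding a_def using fin that by (intro Min_le) force+
  have ab': "1 \<le> a" "1 \<le> b" "?A * a + ?B * b = n" using ab Lmem by auto
  have aB: "a \<le> ?B"
  proof (rule ccontr)
    assume "\<not> a \<le> ?B"
    then have h: "?B < a" by simp
    have "int (?A * (a - ?B) + ?B * (b + ?A)) = int (?A * a + ?B * b)"
      using h by (simp add: of_nat_diff algebra_simps)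
    then have "?A * (a - ?B) + ?B * (b + ?A) = n" using ab'(3) by linarith
    then have "(a - ?B, b + ?A) \<in> L" using Lmem h ab'(2) by auto
    then have "a \<le> a - ?B" using amin by blast
    then show False using h B1 by linarith
  qed
  have bal: "b \<le> al * a"
  proof (rule ccontr)
    assume "\<not> b \<le> al * a"
    then have h: "al * a < b" by simp
    have "walk al (b - al * a) a (Suc (smax al n)) = walk al a (al * a + (b - al * a)) (smax al n)"
      using walk_shift[of al "b - al * a" a "Suc i"] si by simp
    also have "\<dots> = walk al a b (smax al n)" using h by simp
    also have "\<dots> = n" using ab'(3) si by (simp add: walk_G j_def)
    finally have "1 \<le> b - al * a \<and> 1 \<le> a \<and> walk al (b - al * a) a (Suc (smax al n)) = n"
      using h ab'(1) by simp
    moreover have "1 \<le> Suc (smax al n)" by simp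
    ultimately have "Suc (smax al n) \<in> SS al n" unfolding SS_def by blast
    then show False using smax_ge[OF al] by fastforce
  qed
  have bp: "p * ?A < b"
  proof (rule ccontr)
    assume "\<not> p * ?A < b"
    then have h: "b - 1 < p * ?A" using ab'(2) by linarith
    define f where "f t = (a + t * ?B, b - t * ?A)" for t
    have sub: "L \<subseteq> f ` {0..(b - 1) div ?A}"
    proof
      fix z assume z: "z \<in> L"
      obtain x y where zxy: "z = (x, y)" by (cases z)
      have xy: "1 \<le> x" "1 \<le> y" "?A * x + ?B * y = n" using z zxy Lmem by auto
      have "a \<le> x" using amin z zxy by blast
      have e: "?A * a + ?B * b = ?A * x + ?B * y" using xy ab' by simp
      obtain t :: int where t: "int x = int a + t * int ?B" "int y = int b - t * int ?A"
        using sol_struct[OF al e] by blast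
      have t0: "t \<ge> 0"
      proof (rule ccontr)
        assume "\<not> t \<ge> 0"
        then have "t \<le> -1" by simp
        then have "t * int ?B \<le> -1 * int ?B" by (intro mult_right_mono) auto
        then show False using t(1) \<open>a \<le> x\<close> B1 by linarith
      qed
      define t' where "t' = nat t"
      have tt: "int t' = t" using t0 by (simp add: t'_def)
      have "int (t' * ?A) \<le> int (b - 1)" using t(2) xy(2) tt ab'(2) by (simp add: of_nat_diff)
      then have "t' * ?A \<le> b - 1" by linarith
      then have tle: "t' \<le> (b - 1) div ?A" using A1 by (simp add: less_eq_div_iff_mult_less_eq)
      have "int x = int (a + t' * ?B)" using t(1) tt by simp
      then have "x = a + t' * ?B" by linarith
      moreover have "int y = int (b - t' * ?A)" using t(2) tt \<open>t' * ?A \<le> b - 1\<close> by (simp add: of_nat_diff)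
      then have "y = b - t' * ?A" by linarith
      ultimately show "z \<in> f ` {0..(b - 1) div ?A}" using zxy tle by (auto simp: f_def)
    qed
    have "card L \<le> card (f ` {0..(b - 1) div ?A})" using card_mono[OF _ sub] by simp
    also have "\<dots> \<le> (b - 1) div ?A + 1" using card_image_le[of "{0..(b - 1) div ?A}" f] by simp
    also have "(b - 1) div ?A < p" using h A1 by (simp add: div_less_iff_less_mult)
    finally show False using cL by linarith
  qed
  have "(a, b) \<in> Dset al p j" using ab' aB bal bp by (simp add: Dset_def)
  moreover have "n = Phi al j (a, b)" using ab' by (simp add: Phi_def)
  ultimately show ?thesis using j by blast
qed

lemma Phi_inj:
  assumes al: "1 \<le> al" and j: "1 \<le> j" and j': "1 \<le> j'"
    and ab: "(a, b) \<in> Dset al p j" and ab': "(a', b') \<in> Dset al p j'"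
    and e: "Phi al j (a, b) = Phi al j' (a', b')"
  shows "j = j' \<and> a = a' \<and> b = b'"
proof -
  have h: "1 \<le> a" "a \<le> G al (Suc j)" "1 \<le> b" "b \<le> al * a" using ab by (auto simp: Dset_def)
  have h': "1 \<le> a'" "a' \<le> G al (Suc j')" "1 \<le> b'" "b' \<le> al * a'" using ab' by (auto simp: Dset_def)
  have s1: "smax al (Phi al j (a, b)) = Suc (Suc j)"
    using level_smax[OF al j h] by (simp add: Phi_def)
  have s2: "smax al (Phi al j' (a', b')) = Suc (Suc j')"
    using level_smax[OF al j' h'] by (simp add: Phi_def)
  have jj: "j = j'" using s1 s2 e by simp
  have h2': "a' \<le> G al (Suc j)" using h'(2) jj by simp
  have e2: "G al j * a + G al (Suc j) * b = G al j * a' + G al (Suc j) * b'"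
    using e jj by (simp add: Phi_def)
  obtain t :: int where t: "int a' = int a + t * int (G al (Suc j))" "int b' = int b - t * int (G al j)"
    using sol_struct[OF al e2] by blast
  have t0: "t = 0"
  proof (rule ccontr)
    assume "t \<noteq> 0"
    then consider "t \<ge> 1" | "t \<le> -1" by linarith
    then show False
    proof cases
      case 1
      then have "1 * int (G al (Suc j)) \<le> t * int (G al (Suc j))" by (intro mult_right_mono) auto
      then show False using t(1) h2' h(1) by linarith
    next
      case 2
      then have "t * int (G al (Suc j)) \<le> -1 * int (G al (Suc j))" by (intro mult_right_mono) auto
      then show False using t(1) h'(1) h(2) by linarith
    qed
  qed
  then show ?thesis using t jj by simp
qed

definition Cnt :: "nat \<Rightarrow> nat \<Rightarrow> nat \<Rightarrow> nat \<Rightarrow> nat" where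
  "Cnt al p j N = card (Dset al p j \<inter> {z. Phi al j z \<le> N})"

lemma Dset_finite: "finite (Dset al p j)"
  by (rule finite_subset[of _ "{..G al (Suc j)} \<times> {..al * G al (Suc j)}"])
     (auto simp: Dset_def intro: order.trans)

lemma Phi_ge:
  assumes al: "1 \<le> al" and "(a, b) \<in> Dset al p j" shows "j \<le> Phi al j (a, b)"
proof -
  have "1 \<le> b" using assms(2) by (auto simp: Dset_def)
  then have h1: "G al (Suc j) * 1 \<le> G al (Suc j) * b" by (rule mult_le_mono2)
  have h2: "Phi al j (a, b) = G al j * a + G al (Suc j) * b" by (simp add: Phi_def)
  show ?thesis using G_ge_lin[OF al, of j] h1 h2 by linarith
qed

lemma count_bounds:
  assumes al: "1 \<le> al"
  shows "(\<Sum>j\<in>{1..N}. Cnt al p j N) \<le> card (Sp al p \<inter> {1..N})"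
    and "card (Sp al p \<inter> {1..N}) \<le> al + (\<Sum>j\<in>{1..N}. Cnt al p j N)"
proof -
  define W where "W = (\<Union>j\<in>{1..N}. Phi al j ` (Dset al p j \<inter> {z. Phi al j z \<le> N}))"
  have finW: "finite W" unfolding W_def using Dset_finite by auto
  have cW: "card W = (\<Sum>j\<in>{1..N}. Cnt al p j N)"
    unfolding W_def Cnt_def
  proof (subst card_UN_disjoint)
    show "finite {1..N}" by simp
    show "\<forall>i\<in>{1..N}. finite (Phi al i ` (Dset al p i \<inter> {z. Phi al i z \<le> N}))"
      using Dset_finite by auto
    show "\<forall>i\<in>{1..N}. \<forall>j\<in>{1..N}. i \<noteq> j \<longrightarrow>
      Phi al i ` (Dset al p i \<inter> {z. Phi al i z \<le> N}) \<inter> Phi al j ` (Dset al p j \<inter> {z. Phi al j z \<le> N}) = {}"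
      using Phi_inj[OF al] by fastforce
    show "(\<Sum>i\<in>{1..N}. card (Phi al i ` (Dset al p i \<inter> {z. Phi al i z \<le> N}))) =
      (\<Sum>j\<in>{1..N}. card (Dset al p j \<inter> {z. Phi al j z \<le> N}))"
    proof (rule sum.cong)
      fix j assume j: "j \<in> {1..N}"
      have "inj_on (Phi al j) (Dset al p j \<inter> {z. Phi al j z \<le> N})"
        by (rule inj_onI) (use j Phi_inj[OF al, of j j] in auto)
      then show "card (Phi al j ` (Dset al p j \<inter> {z. Phi al j z \<le> N})) =
        card (Dset al p j \<inter> {z. Phi al j z \<le> N})" by (rule card_image)
    qed simp
  qed
  have sub1: "W \<subseteq> Sp al p \<inter> {1..N}"
  proof
    fix n assume "n \<in> W"
    then obtain j a b where j: "j \<in> {1..N}" "(a, b) \<in> Dset al p j" "Phi al j (a, b) \<le> N" "n = Phi al j (a, b)"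
      unfolding W_def by auto
    then have "n \<in> Sp al p" using in_Sp[OF al] by auto
    then show "n \<in> Sp al p \<inter> {1..N}" using j by (auto simp: Sp_def)
  qed
  have sub2: "Sp al p \<inter> {1..N} \<subseteq> W \<union> {1..al}"
  proof
    fix n assume n: "n \<in> Sp al p \<inter> {1..N}"
    show "n \<in> W \<union> {1..al}"
    proof (cases "al < n")
      case True
      then obtain j a b where jab: "1 \<le> j" "(a, b) \<in> Dset al p j" "n = Phi al j (a, b)"
        using from_Sp[OF al _ True] n by blast
      have "j \<le> N" using Phi_ge[OF al jab(2)] jab(3) n by simp
      then have "n \<in> W" unfolding W_def using jab n by auto
      then show ?thesis by simp
    next
      case False then show ?thesis using n by auto
    qed
  qed
  show "(\<Sum>j\<in>{1..N}. Cnt al p j N) \<le> card (Sp al p \<inter> {1..N})"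
    using card_mono[OF _ sub1] cW by simp
  have "card (Sp al p \<inter> {1..N}) \<le> card (W \<union> {1..al})" using card_mono[OF _ sub2] finW by simp
  also have "\<dots> \<le> card W + card {1..al}" by (rule card_Un_le)
  finally show "card (Sp al p \<inter> {1..N}) \<le> al + (\<Sum>j\<in>{1..N}. Cnt al p j N)" using cW by simp
qed

lemma T_sum: "card (Dset al p j) = (\<Sum>a\<in>{1..G al (Suc j)}. al * a - p * G al j)"
proof -
  have "Dset al p j = Sigma {1..G al (Suc j)} (\<lambda>a. {p * G al j<..al * a})"
    by (auto simp: Dset_def)
  then show ?thesis by simp
qed

lemma Cnt_le_T: "Cnt al p j N \<le> card (Dset al p j)"
  unfolding Cnt_def by (rule card_mono[OF Dset_finite]) auto

lemma Phi_le_top: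
  assumes "(a, b) \<in> Dset al p j"
  shows "Phi al j (a, b) \<le> G al (Suc j) * G al (Suc (Suc j))"
proof -
  let ?A = "G al j" and ?B = "G al (Suc j)"
  have h: "a \<le> ?B" "b \<le> al * a" using assms by (auto simp: Dset_def)
  have h1: "?A * a \<le> ?A * ?B" using h by simp
  have "al * a \<le> al * ?B" using h by simp
  then have "b \<le> al * ?B" using h by linarith
  then have h2: "?B * b \<le> ?B * (al * ?B)" by simp
  have "Phi al j (a, b) \<le> ?A * ?B + ?B * (al * ?B)" unfolding Phi_def using add_mono[OF h1 h2] by simp
  also have "\<dots> = ?B * G al (Suc (Suc j))" by (simp add: algebra_simps)
  finally show ?thesis .
qed

lemma Cnt_full:
  assumes "G al (Suc j) * G al (Suc (Suc j)) \<le> N"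
  shows "Cnt al p j N = card (Dset al p j)"
proof -
  have "Dset al p j \<inter> {z. Phi al j z \<le> N} = Dset al p j"
    using Phi_le_top assms by fastforce
  then show ?thesis by (simp add: Cnt_def)
qed

lemma Cnt_lower:
  assumes al: "1 \<le> al"
  shows "card (Dset al p j) \<le> Cnt al p j N + (G al (Suc j) * G al (Suc (Suc j)) - N) + G al (Suc j)"
proof -
  let ?A = "G al j" and ?B = "G al (Suc j)"
  define M where "M = ?B * G al (Suc (Suc j)) - N"
  have B1: "1 \<le> ?B" using G_pos[OF _ al] by simp
  let ?X = "Dset al p j \<inter> {z. \<not> Phi al j z \<le> N}"
  have split: "Dset al p j = (Dset al p j \<inter> {z. Phi al j z \<le> N}) \<union> ?X" by auto
  have "card (Dset al p j) \<le> Cnt al p j N + card ?X"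
    unfolding Cnt_def by (subst split) (rule card_Un_le)
  moreover have "?X \<subseteq> (\<lambda>(a, i). (a, al * ?B - i)) ` ({1..?B} \<times> {..M div ?B})"
  proof
    fix z assume z: "z \<in> ?X"
    obtain a b where zab: "z = (a, b)" by (cases z)
    have h: "1 \<le> a" "a \<le> ?B" "b \<le> al * a" "N < ?A * a + ?B * b" using z zab
      by (auto simp: Dset_def Phi_def)
    have "al * a \<le> al * ?B" using h by simp
    then have bB: "b \<le> al * ?B" using h by linarith
    have "?A * a \<le> ?A * ?B" using h by simp
    have top: "?B * G al (Suc (Suc j)) = ?A * ?B + ?B * (al * ?B)" by (simp add: algebra_simps)
    have Nlt: "N < ?A * ?B + ?B * (al * ?B)" using h(4) \<open>?A * a \<le> ?A * ?B\<close> \<open>b \<le> al * ?B\<close>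
      by (meson add_le_mono le_trans mult_le_mono2 not_less)
    have Meq: "int M = int (?A * ?B) + int (?B * (al * ?B)) - int N"
      unfolding M_def top using Nlt by (simp add: of_nat_diff)
    have "int (?B * (al * ?B - b)) = int (?B * (al * ?B)) - int (?B * b)"
      using bB by (simp add: of_nat_diff right_diff_distrib)
    also have "\<dots> < int M"
    proof -
      have "int N < int (?A * a) + int (?B * b)" using h(4) by linarith
      moreover have "int (?A * a) \<le> int (?A * ?B)" using \<open>?A * a \<le> ?A * ?B\<close> by linarith
      ultimately show ?thesis using Meq by linarith
    qed
    finally have "int (?B * (al * ?B - b)) < int M" .
    then have "?B * (al * ?B - b) \<le> M" by linarith
    then have "(al * ?B - b) * ?B \<le> M" by (simp add: mult.commute)
    then have "al * ?B - b \<le> M div ?B" using B1 by (simp add: less_eq_div_iff_mult_less_eq)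
    then show "z \<in> (\<lambda>(a, i). (a, al * ?B - i)) ` ({1..?B} \<times> {..M div ?B})"
      using zab h bB by (auto intro!: image_eqI[of _ _ "(a, al * ?B - b)"])
  qed
  then have "card ?X \<le> card ({1..?B} \<times> {..M div ?B})"
    using card_image_le[of "{1..?B} \<times> {..M div ?B}" "\<lambda>(a, i). (a, al * ?B - i)"]
    by (meson card_mono dual_order.trans finite_SigmaI finite_atLeastAtMost finite_atMost finite_imageI)
  also have "\<dots> = ?B * (M div ?B + 1)" by (simp add: card_cartesian_product)
  also have "\<dots> \<le> M + ?B" by (simp add: algebra_simps)
  finally show ?thesis using \<open>card (Dset al p j) \<le> Cnt al p j N + card ?X\<close> unfolding M_def by linarith
qed

lemma Cnt_upper:
  assumes al: "1 \<le> al"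
  shows "Cnt al p j N \<le> G al (Suc j) * (al * N div G al (Suc (Suc j)) - p * G al j)"
proof -
  let ?A = "G al j" and ?B = "G al (Suc j)" and ?C = "G al (Suc (Suc j))"
  have C1: "1 \<le> ?C" using G_pos[OF _ al, of "Suc (Suc j)"] by (simp del: G.simps)
  have "Dset al p j \<inter> {z. Phi al j z \<le> N} \<subseteq> {1..?B} \<times> {p * ?A<..al * N div ?C}"
  proof
    fix z assume z: "z \<in> Dset al p j \<inter> {z. Phi al j z \<le> N}"
    obtain a b where zab: "z = (a, b)" by (cases z)
    have h: "1 \<le> a" "a \<le> ?B" "p * ?A < b" "b \<le> al * a" "?A * a + ?B * b \<le> N" using z zab
      by (auto simp: Dset_def Phi_def)
    have "?A * b \<le> ?A * (al * a)" using h by simp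
    then have "b * ?C \<le> al * (?A * a + ?B * b)" by (simp add: algebra_simps)
    also have "\<dots> \<le> al * N" using h by simp
    finally have bc: "b * ?C \<le> al * N" .
    have C0: "0 < ?C" using C1 by linarith
    have "b \<le> al * N div ?C" using less_eq_div_iff_mult_less_eq[OF C0] bc by blast
    then show "z \<in> {1..?B} \<times> {p * ?A<..al * N div ?C}" using zab h by auto
  qed
  then have "Cnt al p j N \<le> card ({1..?B} \<times> {p * ?A<..al * N div ?C})"
    unfolding Cnt_def by (intro card_mono) auto
  then show ?thesis by (simp add: card_cartesian_product)
qed

lemma sqrt_facts:
  assumes al: "1 \<le> al"
  shows "real al < sqrt (real al ^ 2 + 4)" "sqrt (real al ^ 2 + 4) < real al + 2"
    "sqrt (real al ^ 2 + 4) ^ 2 = real al ^ 2 + 4"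
proof -
  have "sqrt ((real al)^2) < sqrt (real al ^ 2 + 4)" by (intro real_sqrt_less_mono) simp
  then show "real al < sqrt (real al ^ 2 + 4)" by simp
  have "sqrt (real al ^ 2 + 4) < sqrt ((real al + 2)^2)"
    using al by (intro real_sqrt_less_mono) (simp add: power2_eq_square algebra_simps)
  then show "sqrt (real al ^ 2 + 4) < real al + 2" by simp
  show "sqrt (real al ^ 2 + 4) ^ 2 = real al ^ 2 + 4" by simp
qed

lemma gl_facts:
  assumes al: "1 \<le> al"
  shows "gam al - lam al = sqrt (real al ^ 2 + 4)"
    "gam al + lam al = real al"
    "gam al * lam al = -1"
    "gam al ^ 2 = real al * gam al + 1"
    "lam al ^ 2 = real al * lam al + 1"
    "real al < gam al" "1 < gam al"
    "-1 < lam al" "lam al < 0"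
    "2 < gam al - lam al"
proof -
  note s = sqrt_facts[OF al]
  let ?s = "sqrt (real al ^ 2 + 4)"
  show "gam al - lam al = ?s" by (simp add: gam_def lam_def field_simps)
  show "gam al + lam al = real al" by (simp add: gam_def lam_def field_simps)
  have "gam al * lam al = (real al ^ 2 - ?s ^ 2) / 4"
    by (simp add: gam_def lam_def power2_eq_square algebra_simps)
  then show gl: "gam al * lam al = -1" using s(3) by simp
  show "gam al ^ 2 = real al * gam al + 1"
    unfolding gam_def using s(3) by (simp add: power2_eq_square field_simps)
  show "lam al ^ 2 = real al * lam al + 1"
    unfolding lam_def using s(3) by (simp add: power2_eq_square field_simps)
  show "real al < gam al" using s(1) by (simp add: gam_def)
  then show "1 < gam al" using al by linarith
  show "-1 < lam al" using s(2) by (simp add: lam_def)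
  show "lam al < 0" using s(1) by (simp add: lam_def)
  have "(2::real)^2 < real al ^ 2 + 4" using al by simp
  then have "2 < ?s" by (rule real_less_rsqrt)
  then show "2 < gam al - lam al" by (simp add: gam_def lam_def field_simps)
qed

lemma binet:
  assumes al: "1 \<le> al"
  shows "real (G al k) = (gam al ^ k - lam al ^ k) / (gam al - lam al)"
proof (induction k rule: less_induct)
  case (less k)
  note f = gl_facts[OF al]
  have d: "gam al - lam al \<noteq> 0" using f(10) by simp
  show ?case
  proof (cases k)
    case 0 then show ?thesis by simp
  next
    case (Suc j)
    show ?thesis
    proof (cases j)
      case 0 then show ?thesis using Suc d by simp
    next
      case (Suc i)
      have h1: "real (G al i) = (gam al ^ i - lam al ^ i) / (gam al - lam al)" using less.IH[of i] Suc \<open>k = Suc j\<close> by simp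
      have h2: "real (G al (Suc i)) = (gam al ^ Suc i - lam al ^ Suc i) / (gam al - lam al)" using less.IH[of "Suc i"] Suc \<open>k = Suc j\<close> by simp
      have "real (G al (Suc (Suc i))) = real al * real (G al (Suc i)) + real (G al i)" by simp
      also have "\<dots> = (real al * (gam al ^ Suc i - lam al ^ Suc i) + (gam al ^ i - lam al ^ i)) / (gam al - lam al)"
        unfolding h1 h2 by (simp add: add_divide_distrib)
      also have "\<dots> = (gam al ^ i * (real al * gam al + 1) - lam al ^ i * (real al * lam al + 1)) / (gam al - lam al)"
        by (simp add: algebra_simps)
      also have "\<dots> = (gam al ^ Suc (Suc i) - lam al ^ Suc (Suc i)) / (gam al - lam al)"
      proof -
        have "gam al ^ Suc (Suc i) = gam al ^ i * gam al ^ 2" by (simp add: power2_eq_square)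
        moreover have "lam al ^ Suc (Suc i) = lam al ^ i * lam al ^ 2" by (simp add: power2_eq_square)
        ultimately show ?thesis using f(4,5) by (simp only:)
      qed
      finally show ?thesis using Suc \<open>k = Suc j\<close> by simp
    qed
  qed
qed

lemma G_approx:
  assumes al: "1 \<le> al"
  shows "\<bar>real (G al k) - gam al ^ k / (gam al - lam al)\<bar> \<le> 1"
proof -
  note f = gl_facts[OF al]
  have "real (G al k) - gam al ^ k / (gam al - lam al) = - (lam al ^ k / (gam al - lam al))"
    using binet[OF al, of k] by (simp add: diff_divide_distrib)
  moreover have "\<bar>lam al ^ k\<bar> \<le> 1"
  proof -
    have "\<bar>lam al\<bar> \<le> 1" using f(8,9) by simp
    then show ?thesis by (simp add: power_abs power_le_one)
  qed
  moreover have "\<bar>lam al ^ k / (gam al - lam al)\<bar> \<le> \<bar>lam al ^ k\<bar>"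
  proof -
    have d0: "0 < gam al - lam al" using f(10) by simp
    have "\<bar>lam al ^ k\<bar> * 1 \<le> \<bar>lam al ^ k\<bar> * (gam al - lam al)"
      using f(10) by (intro mult_left_mono) auto
    then show ?thesis using d0 by (simp add: abs_div divide_le_eq)
  qed
  ultimately show ?thesis by simp
qed

lemma G_le_pow:
  assumes al: "1 \<le> al"
  shows "real (G al k) \<le> gam al ^ k"
proof -
  note f = gl_facts[OF al]
  have la: "\<bar>lam al ^ k\<bar> \<le> 1"
  proof -
    have "\<bar>lam al\<bar> \<le> 1" using f(8,9) by simp
    then show ?thesis by (simp add: power_abs power_le_one)
  qed
  have "gam al ^ k - lam al ^ k \<le> gam al ^ k + 1" using la by linarith
  then have "real (G al k) \<le> (gam al ^ k + 1) / (gam al - lam al)"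
    using binet[OF al, of k] f(10) by (simp add: divide_right_mono)
  also have "\<dots> \<le> (gam al ^ k + gam al ^ k) / 2"
  proof (rule frac_le)
    have "1 \<le> gam al ^ k" using f(7) by (simp add: one_le_power)
    then show "gam al ^ k + 1 \<le> gam al ^ k + gam al ^ k" by simp
    show "0 \<le> gam al ^ k + gam al ^ k" using f(7) by simp
    show "(0::real) < 2" by simp
    show "2 \<le> gam al - lam al" using f(10) by simp
  qed
  finally show ?thesis by simp
qed

lemma T_approx:
  assumes al: "1 \<le> al" and PB: "P \<le> al * B"
  shows "\<bar>real (\<Sum>a\<in>{1..B}. al * a - P) - (real al * real B - real P)^2 / (2 * real al)\<bar>
         \<le> real al * (real B + 1) / 2"
proof -
  define f where "f = P div al"
  define \<rho> where "\<rho> = P mod al"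
  have Pf: "P = al * f + \<rho>" by (simp add: f_def \<rho>_def)
  have \<rho>lt: "\<rho> < al" using al by (simp add: \<rho>_def)
  have "al * f \<le> al * B" using PB Pf by linarith
  then have fB: "f \<le> B" using al by simp
  have closed: "real (\<Sum>a\<in>{1..f+m}. al * a - P) =
      real al * (real (f+m) * (real (f+m) + 1) - real f * (real f + 1)) / 2 - real P * real m" for m
  proof (induction m)
    case 0
    have "(\<Sum>a\<in>{1..f}. al * a - P) = 0"
    proof (rule sum.neutral, rule ballI)
      fix a assume "a \<in> {1..f}"
      then have "al * a \<le> al * f" by simp
      then show "al * a - P = 0" using Pf by linarith
    qed
    then show ?case by simp
  next
    case (Suc m)
    have "al * (f + 1) \<le> al * (f + Suc m)" by simp
    moreover have "P < al * (f + 1)" using Pf \<rho>lt by simp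
    ultimately have lt: "P < al * (f + Suc m)" by linarith
    have "(\<Sum>a\<in>{1..f + Suc m}. al * a - P) = (\<Sum>a\<in>{1..f+m}. al * a - P) + (al * (f + Suc m) - P)"
      by (simp add: add_Suc_right)
    then have "real (\<Sum>a\<in>{1..f + Suc m}. al * a - P) = real (\<Sum>a\<in>{1..f+m}. al * a - P) + (real al * real (f + Suc m) - real P)"
      using lt by (simp add: of_nat_diff algebra_simps)
    also have "\<dots> = real al * (real (f + Suc m) * (real (f + Suc m) + 1) - real f * (real f + 1)) / 2 - real P * real (Suc m)"
      unfolding Suc.IH by (simp add: field_simps)
    finally show ?case .
  qed
  have B: "B = f + (B - f)" using fB by simp
  have S: "real (\<Sum>a\<in>{1..B}. al * a - P) =
      real al * (real B * (real B + 1) - real f * (real f + 1)) / 2 - real P * (real B - real f)"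
    using closed[of "B - f"] fB by (simp add: of_nat_diff)
  have alpos: "0 < real al" using al by simp
  have diff: "real (\<Sum>a\<in>{1..B}. al * a - P) - (real al * real B - real P)^2 / (2 * real al)
      = real al * (real B - real f) / 2 - (real \<rho>)^2 / (2 * real al)"
  proof -
    have Pr: "real P = real al * real f + real \<rho>" using Pf by simp
    show ?thesis unfolding S Pr using alpos by (simp add: field_simps power2_eq_square)
  qed
  have r1: "0 \<le> (real \<rho>)^2 / (2 * real al)" by simp
  have "(real \<rho>)^2 \<le> (real al)^2" using \<rho>lt by (simp add: power_mono)
  then have r2: "(real \<rho>)^2 / (2 * real al) \<le> real al / 2" using alpos
    by (simp add: divide_le_eq power2_eq_square)
  have b1: "0 \<le> real al * (real B - real f) / 2" using fB by simp
  have b2: "real al * (real B - real f) / 2 \<le> real al * real B / 2" using alpos by simp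
  have e: "real al * (real B + 1) / 2 = real al * real B / 2 + real al / 2" by (simp add: field_simps)
  have "0 \<le> real al * real B / 2" by simp
  then show ?thesis unfolding diff abs_le_iff using r1 r2 b1 b2 e by linarith
qed

lemma Q_approx:
  fixes p :: nat
  assumes al: "1 \<le> al"
  defines "g \<equiv> gam al" and "l \<equiv> lam al"
  defines "d \<equiv> g - l" and "u \<equiv> real al * g - real p" and "E0 \<equiv> real al + real p"
  shows "\<bar>(real al * real (G al (Suc j)) - real p * real (G al j))^2 / (2 * real al)
           - u^2 * g^(2*j) / (2 * real al * d^2)\<bar>
         \<le> (2 * \<bar>u\<bar> * E0 / d + E0^2) / (2 * real al) * g^j"
proof -
  note f = gl_facts[OF al, folded g_def l_def]
  have d0: "0 < d" "2 < d" using f(10) by (auto simp: d_def)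
  have alpos: "0 < real al" using al by simp
  define x where "x = real al * real (G al (Suc j)) - real p * real (G al j)"
  define y where "y = u * g^j / d"
  define e where "e = (real p - real al * l) * l^j / d"
  have b1: "real (G al j) = (g^j - l^j) / d" using binet[OF al, of j] by (simp add: g_def l_def d_def)
  have b2: "real (G al (Suc j)) = (g^Suc j - l^Suc j) / d" using binet[OF al, of "Suc j"] by (simp add: g_def l_def d_def)
  have xy: "x = y + e"
    unfolding x_def y_def e_def u_def b1 b2
    using d0 by (simp add: field_simps)
  have lj: "\<bar>l^j\<bar> \<le> 1"
  proof -
    have "\<bar>l\<bar> \<le> 1" using f(8,9) by simp
    then show ?thesis by (simp add: power_abs power_le_one)
  qed
  have pl: "\<bar>real p - real al * l\<bar> \<le> E0"
  proof -
    have "real al * l \<le> 0" using f(9) alpos by (intro mult_nonneg_nonpos) auto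
    then have "0 \<le> - (real al * l)" by simp
    moreover have "real al * (-l) \<le> real al * 1" using f(8) alpos by (intro mult_left_mono) auto
    then have "- (real al * l) \<le> real al" by simp
    ultimately show ?thesis unfolding E0_def by simp
  qed
  have E0pos: "0 \<le> E0" unfolding E0_def by simp
  have e_le: "\<bar>e\<bar> \<le> E0"
  proof -
    have "\<bar>(real p - real al * l) * l^j\<bar> \<le> E0 * 1"
      unfolding abs_mult using pl lj by (intro mult_mono) auto
    then have "\<bar>e\<bar> \<le> E0 / d" unfolding e_def using d0 by (simp add: abs_div divide_right_mono)
    also have "\<dots> \<le> E0" using d0 E0pos by (simp add: divide_le_eq mult_le_cancel_left1)
    finally show ?thesis .
  qed
  have gj: "1 \<le> g^j" using f(7) by (simp add: g_def one_le_power)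
  have "\<bar>x^2 - y^2\<bar> = \<bar>2 * y * e + e^2\<bar>" unfolding xy by (simp add: power2_eq_square algebra_simps)
  also have "\<dots> \<le> \<bar>2 * y * e\<bar> + \<bar>e^2\<bar>" by (rule abs_triangle_ineq)
  also have "\<dots> = 2 * \<bar>y\<bar> * \<bar>e\<bar> + e^2" by (simp add: abs_mult)
  also have "\<dots> \<le> 2 * (\<bar>u\<bar> * g^j / d) * E0 + E0^2"
  proof -
    have "\<bar>y\<bar> = \<bar>u\<bar> * g^j / d" unfolding y_def using d0 gj by (simp add: abs_mult abs_div)
    moreover have "e^2 \<le> E0^2" using e_le by (metis abs_ge_zero power2_abs power_mono)
    moreover have "\<bar>y\<bar> * \<bar>e\<bar> \<le> \<bar>y\<bar> * E0" using e_le by (simp add: mult_left_mono)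
    ultimately show ?thesis by simp
  qed
  also have "\<dots> \<le> (2 * \<bar>u\<bar> * E0 / d + E0^2) * g^j"
  proof -
    have "E0^2 \<le> E0^2 * g^j" using gj by (simp add: mult_le_cancel_left1)
    then show ?thesis by (simp add: algebra_simps)
  qed
  finally have main: "\<bar>x^2 - y^2\<bar> \<le> (2 * \<bar>u\<bar> * E0 / d + E0^2) * g^j" .
  have y2: "y^2 = u^2 * g^(2*j) / d^2" unfolding y_def by (simp add: power2_eq_square power_mult field_simps)
  have "\<bar>x^2 / (2 * real al) - u^2 * g^(2*j) / (2 * real al * d^2)\<bar> = \<bar>x^2 - y^2\<bar> / (2 * real al)"
    unfolding y2 using alpos d0 by (simp add: field_simps abs_div)
  also have "\<dots> \<le> (2 * \<bar>u\<bar> * E0 / d + E0^2) * g^j / (2 * real al)"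
    using main alpos by (simp add: divide_right_mono)
  finally show ?thesis unfolding x_def by simp
qed

lemma geo2:
  fixes g :: real
  shows "(\<Sum>j\<in>{1..n}. g^(2*j)) * (g^2 - 1) = g^(2*n+2) - g^2"
proof (induction n)
  case 0 then show ?case by (simp add: power2_eq_square)
next
  case (Suc n)
  let ?S = "\<Sum>j\<in>{1..n}. g^(2*j)"
  have "(\<Sum>j\<in>{1..Suc n}. g^(2*j)) = ?S + g^(2*n+2)" by simp
  then have "(\<Sum>j\<in>{1..Suc n}. g^(2*j)) * (g^2 - 1) = ?S * (g^2 - 1) + g^(2*n+2) * (g^2 - 1)"
    by (simp add: distrib_right)
  also have "\<dots> = g^(2*n+2) - g^2 + g^(2*n+2) * (g^2 - 1)" using Suc by simp
  also have "\<dots> = g^(2*n+2) * g^2 - g^2" by (simp add: algebra_simps)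
  also have "g^(2*n+2) * g^2 = g^(2 * Suc n + 2)" by (subst power_add[symmetric]) simp
  finally show ?case .
qed

lemma geo1:
  fixes g :: real
  shows "(\<Sum>j\<in>{1..n}. g^j) * (g - 1) = g^(n+1) - g"
proof (induction n)
  case 0 then show ?case by simp
next
  case (Suc n)
  have "(\<Sum>j\<in>{1..Suc n}. g^j) = (\<Sum>j\<in>{1..n}. g^j) + g^(Suc n)" by simp
  then show ?case using Suc by (simp add: algebra_simps)
qed

lemma G_step: "al * G al j \<le> G al (Suc j)"
  by (cases j) auto

lemma main_sum:
  assumes al: "1 \<le> al" and pal: "p \<le> al^2"
  shows "\<exists>Cm. \<forall>n. \<bar>(\<Sum>j\<in>{1..n}. real (card (Dset al p j)))
      - (1 - real p / (real al * gam al))^2 / (2 * (gam al - lam al)^2) * gam al ^ (2*n+3)\<bar>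
      \<le> Cm * gam al ^ n"
proof -
  define g where "g = gam al"
  define l where "l = lam al"
  define d where "d = g - l"
  define u where "u = real al * g - real p"
  define E0 where "E0 = real al + real p"
  define CQ where "CQ = (2 * \<bar>u\<bar> * E0 / d + E0^2) / (2 * real al)"
  define Kc where "Kc = (1 - real p / (real al * g))^2 / (2 * d^2)"
  define Cm where "Cm = (real al + CQ) * g^2 / (g - 1) + u^2 * g^2 / (2 * real al * d^2 * (g^2 - 1))"
  note f = gl_facts[OF al, folded g_def l_def]
  have d0: "0 < d" using f(10) by (simp add: d_def)
  have alpos: "0 < real al" using al by simp
  have g1: "1 < g" using f(7) .
  have g21: "g^2 - 1 = real al * g" using f(4) by simp
  have CQ0: "0 \<le> CQ" unfolding CQ_def E0_def using d0 alpos by simp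
  define W where "W j = u^2 * g^(2*j) / (2 * real al * d^2)" for j
  have perj: "\<bar>real (card (Dset al p j)) - W j\<bar> \<le> (real al + CQ) * g * g^j" for j
  proof -
    let ?A = "G al j" and ?B = "G al (Suc j)"
    have "p * ?A \<le> al^2 * ?A" using pal by simp
    also have "\<dots> = al * (al * ?A)" by (simp add: power2_eq_square)
    also have "\<dots> \<le> al * ?B" using G_step[of al j] by simp
    finally have PB: "p * ?A \<le> al * ?B" .
    have t1: "\<bar>real (card (Dset al p j)) - (real al * real ?B - real (p * ?A))^2 / (2 * real al)\<bar>
        \<le> real al * (real ?B + 1) / 2"
      using T_approx[OF al PB] by (simp add: T_sum)
    have t2: "\<bar>(real al * real ?B - real p * real ?A)^2 / (2 * real al) - W j\<bar> \<le> CQ * g^j"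
      using Q_approx[OF al, where p=p and j=j] unfolding W_def CQ_def E0_def u_def d_def g_def l_def by simp
    have B: "real ?B \<le> g^Suc j" using G_le_pow[OF al, of "Suc j"] by (simp add: g_def)
    have gj: "1 \<le> g^j" using g1 by (simp add: one_le_power)
    have "real al * (real ?B + 1) / 2 \<le> real al * (g * g^j)"
    proof -
      have "1 * 1 \<le> g * g^j" using gj g1 by (intro mult_mono) auto
      then have "real ?B + 1 \<le> 2 * (g * g^j)" using B by simp
      then have "real al * (real ?B + 1) \<le> real al * (2 * (g * g^j))" using alpos by (intro mult_left_mono) auto
      then show ?thesis by simp
    qed
    moreover have "CQ * g^j \<le> CQ * (g * g^j)" using CQ0 gj g1
      by (intro mult_left_mono) (auto simp: mult_le_cancel_right1)
    moreover have t1': "\<bar>real (card (Dset al p j)) - (real al * real ?B - real p * real ?A)^2 / (2 * real al)\<bar>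
        \<le> real al * (real ?B + 1) / 2" using t1 by simp
    moreover have tri: "\<bar>a - c\<bar> \<le> \<bar>a - b\<bar> + \<bar>b - c\<bar>" for a b c :: real
      using abs_triangle_ineq[of "a - b" "b - c"] by simp
    ultimately have "\<bar>real (card (Dset al p j)) - W j\<bar> \<le> real al * (g * g^j) + CQ * (g * g^j)"
      using t2 tri[of "real (card (Dset al p j))" "(real al * real ?B - real p * real ?A)^2 / (2 * real al)" "W j"]
      by linarith
    then show ?thesis by (simp add: algebra_simps)
  qed
  have "\<forall>n. \<bar>(\<Sum>j\<in>{1..n}. real (card (Dset al p j))) - Kc * g^(2*n+3)\<bar> \<le> Cm * g^n"
  proof
    fix n
    have gn: "1 \<le> g^n" using g1 by (simp add: one_le_power)
    have s1: "\<bar>(\<Sum>j\<in>{1..n}. real (card (Dset al p j))) - (\<Sum>j\<in>{1..n}. W j)\<bar>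
        \<le> (real al + CQ) * g * (\<Sum>j\<in>{1..n}. g^j)"
    proof -
      have "\<bar>(\<Sum>j\<in>{1..n}. real (card (Dset al p j))) - (\<Sum>j\<in>{1..n}. W j)\<bar>
          = \<bar>\<Sum>j\<in>{1..n}. real (card (Dset al p j)) - W j\<bar>" by (simp add: sum_subtractf)
      also have "\<dots> \<le> (\<Sum>j\<in>{1..n}. \<bar>real (card (Dset al p j)) - W j\<bar>)" by (rule sum_abs)
      also have "\<dots> \<le> (\<Sum>j\<in>{1..n}. (real al + CQ) * g * g^j)" by (rule sum_mono) (rule perj)
      also have "\<dots> = (real al + CQ) * g * (\<Sum>j\<in>{1..n}. g^j)" by (simp add: sum_distrib_left)
      finally show ?thesis .
    qed
    have geo: "(\<Sum>j\<in>{1..n}. g^j) \<le> g * g^n / (g - 1)"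
    proof -
      have "(\<Sum>j\<in>{1..n}. g^j) * (g - 1) = g^(n+1) - g" by (rule geo1)
      then have "(\<Sum>j\<in>{1..n}. g^j) = (g^(n+1) - g) / (g - 1)" using g1 by (simp add: field_simps)
      also have "\<dots> \<le> g * g^n / (g - 1)" using g1 by (simp add: divide_right_mono)
      finally show ?thesis .
    qed
    have s2: "(\<Sum>j\<in>{1..n}. W j) = Kc * g^(2*n+3) - u^2 * g^2 / (2 * real al * d^2 * (g^2 - 1))"
    proof -
      have gne: "g^2 - 1 \<noteq> 0" using g21 alpos g1 by simp
      have "(\<Sum>j\<in>{1..n}. W j) = u^2 / (2 * real al * d^2) * (\<Sum>j\<in>{1..n}. g^(2*j))"
        unfolding W_def by (simp add: sum_distrib_left)
      also have "(\<Sum>j\<in>{1..n}. g^(2*j)) = (g^(2*n+2) - g^2) / (g^2 - 1)"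
        using geo2[of g n] gne by (simp add: field_simps)
      finally have "(\<Sum>j\<in>{1..n}. W j) = u^2 / (2 * real al * d^2) * ((g^(2*n+2) - g^2) / (g^2 - 1))" .
      also have "\<dots> = u^2 * g^(2*n+2) / (2 * real al * d^2 * (g^2 - 1)) - u^2 * g^2 / (2 * real al * d^2 * (g^2 - 1))"
        by (simp only: times_divide_times_eq right_diff_distrib diff_divide_distrib)
      also have "u^2 * g^(2*n+2) / (2 * real al * d^2 * (g^2 - 1)) = Kc * g^(2*n+3)"
      proof -
        have e1: "g^(2*n+2) = g^(2*n+1) * g" by simp
        have "2*n+3 = Suc (Suc (Suc (2*n)))" by simp
        then have e2: "g^(2*n+3) = g^(2*n+1) * g^2" by (simp only: power_Suc) (simp add: power2_eq_square algebra_simps)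
        show ?thesis unfolding e1 e2 g21 Kc_def u_def using g1 alpos d0
          by (simp add: field_simps power2_eq_square)
      qed
      finally show ?thesis .
    qed
    have c0: "0 \<le> u^2 * g^2 / (2 * real al * d^2 * (g^2 - 1))"
      using g21 g1 alpos d0 by (intro divide_nonneg_nonneg; auto)
    have "\<bar>(\<Sum>j\<in>{1..n}. real (card (Dset al p j))) - Kc * g^(2*n+3)\<bar>
        \<le> (real al + CQ) * g * (g * g^n / (g - 1)) + u^2 * g^2 / (2 * real al * d^2 * (g^2 - 1))"
    proof -
      have "(real al + CQ) * g * (\<Sum>j\<in>{1..n}. g^j) \<le> (real al + CQ) * g * (g * g^n / (g - 1))"
        using geo CQ0 alpos g1 by (intro mult_left_mono) auto
      then show ?thesis using s1 s2 c0 by (simp add: abs_le_iff; linarith)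
    qed
    also have "\<dots> \<le> Cm * g^n"
    proof -
      have "u^2 * g^2 / (2 * real al * d^2 * (g^2 - 1)) \<le> u^2 * g^2 / (2 * real al * d^2 * (g^2 - 1)) * g^n"
        using mult_left_mono[OF gn c0] by simp
      moreover have "(real al + CQ) * g * (g * g^n / (g - 1)) = (real al + CQ) * g^2 / (g - 1) * g^n"
        by (simp add: divide_inverse algebra_simps power2_eq_square)
      moreover have "Cm * g^n = (real al + CQ) * g^2 / (g - 1) * g^n + u^2 * g^2 / (2 * real al * d^2 * (g^2 - 1)) * g^n"
        unfolding Cm_def by (simp add: distrib_right)
      ultimately show ?thesis by linarith
    qed
    finally show "\<bar>(\<Sum>j\<in>{1..n}. real (card (Dset al p j))) - Kc * g^(2*n+3)\<bar> \<le> Cm * g^n" .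
  qed
  then show ?thesis unfolding Kc_def d_def g_def l_def by blast
qed

lemma comb_bounds:
  assumes al: "1 \<le> al" and n: "1 \<le> n"
    and hA: "n + 1 \<le> N"
    and hB: "G al n * G al (Suc n) \<le> N"
    and hD: "al * N < (p * G al (Suc n) + p + 2) * G al (n + 3)"
    and hE: "al * N < p * G al (n + 2) * G al (n + 4)"
  shows "(\<Sum>j\<in>{1..n}. card (Dset al p j)) \<le> card (Sp al p \<inter> {1..N})
            + (\<Sum>j\<in>{1..n}. G al (Suc j)) + (G al (Suc n) * G al (n + 2) - N)"
    and "card (Sp al p \<inter> {1..N}) \<le> al + (\<Sum>j\<in>{1..n}. card (Dset al p j)) + (p + 1) * G al (n + 2)"
proof -
  define M where "M = G al (Suc n) * G al (n + 2) - N"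
  have perj: "card (Dset al p j) \<le> Cnt al p j N + G al (Suc j) + (if j = n then M else 0)"
    if j: "j \<in> {1..n}" for j
  proof (cases "j = n")
    case True
    then show ?thesis using Cnt_lower[OF al, of p j N] by (simp add: M_def)
  next
    case False
    then have "Suc (Suc j) \<le> Suc n" using j by simp
    then have "G al (Suc (Suc j)) \<le> G al (Suc n)" using G_mono[OF al] by blast
    moreover have "G al (Suc j) \<le> G al n" using G_mono[OF al] j False by simp
    ultimately have "G al (Suc j) * G al (Suc (Suc j)) \<le> G al n * G al (Suc n)" by (intro mult_le_mono)
    then have "Cnt al p j N = card (Dset al p j)" using hB by (intro Cnt_full) simp
    then show ?thesis by simp
  qed
  have "(\<Sum>j\<in>{1..n}. card (Dset al p j)) \<le> (\<Sum>j\<in>{1..n}. Cnt al p j N + G al (Suc j) + (if j = n then M else 0))"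
    by (rule sum_mono) (rule perj)
  also have "\<dots> = (\<Sum>j\<in>{1..n}. Cnt al p j N) + (\<Sum>j\<in>{1..n}. G al (Suc j)) + M"
    using n by (simp add: sum.distrib)
  also have "(\<Sum>j\<in>{1..n}. Cnt al p j N) \<le> (\<Sum>j\<in>{1..N}. Cnt al p j N)"
    using hA by (intro sum_mono2) auto
  also have "\<dots> \<le> card (Sp al p \<inter> {1..N})" by (rule count_bounds(1)[OF al])
  finally show "(\<Sum>j\<in>{1..n}. card (Dset al p j)) \<le> card (Sp al p \<inter> {1..N})
            + (\<Sum>j\<in>{1..n}. G al (Suc j)) + (G al (Suc n) * G al (n + 2) - N)"
    by (simp add: M_def)
  have zero: "Cnt al p j N = 0" if j: "n + 2 \<le> j" for j
  proof -
    have m1: "G al (n + 2) \<le> G al j" by (rule G_mono[OF al]) (use j in simp)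
    have m2: "G al (n + 4) \<le> G al (j + 2)" by (rule G_mono[OF al]) (use j in simp)
    have "p * G al (n + 2) \<le> p * G al j" using m1 by (rule mult_le_mono2)
    then have m3: "p * G al (n + 2) \<le> p * G al j + 1" by linarith
    have "p * G al (n + 2) * G al (n + 4) \<le> (p * G al j + 1) * G al (j + 2)"
      using m3 m2 by (rule mult_le_mono)
    then have lt: "al * N < (p * G al j + 1) * G al (Suc (Suc j))" using hE by simp
    have C0: "0 < G al (Suc (Suc j))" using G_pos[OF _ al, of "Suc (Suc j)"] by (simp del: G.simps)
    have "al * N div G al (Suc (Suc j)) < p * G al j + 1"
      using lt C0 by (simp add: div_less_iff_less_mult)
    then have "al * N div G al (Suc (Suc j)) - p * G al j = 0" by simp
    then show ?thesis using Cnt_upper[OF al, of p j N] by simp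
  qed
  have lastc: "Cnt al p (Suc n) N \<le> (p + 1) * G al (n + 2)"
  proof -
    have C0: "0 < G al (n + 3)" using G_pos[OF _ al, of "n+3"] by simp
    have "al * N div G al (n + 3) < p * G al (Suc n) + p + 2"
      using hD C0 by (simp add: div_less_iff_less_mult)
    then have "al * N div G al (Suc (Suc (Suc n))) - p * G al (Suc n) \<le> p + 1"
      by (simp add: numeral_eq_Suc)
    then have "G al (Suc (Suc n)) * (al * N div G al (Suc (Suc (Suc n))) - p * G al (Suc n)) \<le> G al (Suc (Suc n)) * (p + 1)"
      by (rule mult_le_mono2)
    then show ?thesis using Cnt_upper[OF al, of p "Suc n" N] by (simp add: numeral_eq_Suc mult.commute)
  qed
  have "(\<Sum>j\<in>{1..N}. Cnt al p j N) = (\<Sum>j\<in>{1..Suc n}. Cnt al p j N)"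
    using hA zero by (intro sum.mono_neutral_right) auto
  also have "\<dots> = (\<Sum>j\<in>{1..n}. Cnt al p j N) + Cnt al p (Suc n) N" by simp
  also have "\<dots> \<le> (\<Sum>j\<in>{1..n}. card (Dset al p j)) + (p + 1) * G al (n + 2)"
    using lastc Cnt_le_T by (intro add_mono sum_mono) auto
  finally have "(\<Sum>j\<in>{1..N}. Cnt al p j N) \<le> (\<Sum>j\<in>{1..n}. card (Dset al p j)) + (p + 1) * G al (n + 2)" .
  then show "card (Sp al p \<inter> {1..N}) \<le> al + (\<Sum>j\<in>{1..n}. card (Dset al p j)) + (p + 1) * G al (n + 2)"
    using count_bounds(2)[OF al, of p N] by linarith
qed

lemma N_bounds:
  assumes al: "1 \<le> al" and c: "0 \<le> c"
  shows "real (ncr al c r) \<le> c / (gam al - lam al)^2 * gam al ^ (2*r+1)"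
    "c / (gam al - lam al)^2 * gam al ^ (2*r+1) - 1 < real (ncr al c r)"
proof -
  note f = gl_facts[OF al]
  define Y where "Y = c / (gam al - lam al)^2 * gam al ^ (2*r+1)"
  have Y0: "0 \<le> Y" unfolding Y_def using c f(7) by simp
  have e: "real (ncr al c r) = real_of_int \<lfloor>Y\<rfloor>" unfolding ncr_def Y_def[symmetric] using Y0 by simp
  show "real (ncr al c r) \<le> c / (gam al - lam al)^2 * gam al ^ (2*r+1)"
    using e Y_def by linarith
  show "c / (gam al - lam al)^2 * gam al ^ (2*r+1) - 1 < real (ncr al c r)"
    using e Y_def by linarith
qed

lemma G_lo: "1 \<le> al \<Longrightarrow> gam al ^ k / (gam al - lam al) - 1 \<le> real (G al k)"
  using G_approx[of al k] by linarith

lemma G_hi: "1 \<le> al \<Longrightarrow> real (G al k) \<le> gam al ^ k / (gam al - lam al) + 1"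
  using G_approx[of al k] by linarith

lemma quad_ge:
  fixes A K X :: real
  assumes "0 \<le> A" "K \<le> X" "0 \<le> X"
  shows "A * K * X \<le> A * X^2"
proof -
  have "A * K \<le> A * X" using assms by (intro mult_left_mono) auto
  then have "A * K * X \<le> A * X * X" using assms by (intro mult_right_mono) auto
  then show ?thesis by (simp add: power2_eq_square mult.assoc)
qed

lemma quad_ge':
  fixes A K X :: real
  assumes "0 < A" "K / A \<le> X" "0 \<le> X"
  shows "K * X \<le> A * X^2"
proof -
  have "K \<le> A * X" using assms by (simp add: pos_divide_le_eq mult.commute)
  then have "K * X \<le> A * X * X" using assms by (intro mult_right_mono) auto
  then show ?thesis by (simp add: power2_eq_square mult.assoc)
qed

lemma cond_a:
  fixes g d X k Nr :: real
  assumes g: "1 < g" and d: "0 < d" and X1: "1 \<le> X" and Xa: "(g^2 + 1) * d^2 / g^3 \<le> X"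
    and k: "k \<le> g^2 * X" and N: "g^3 * X^2 / d^2 - 1 < Nr"
  shows "k < Nr"
proof -
  have A0: "0 < g^3 / d^2" using g d by simp
  have "(g^2 + 1) / (g^3 / d^2) = (g^2 + 1) * d^2 / g^3" using g d by (simp add: field_simps)
  then have "(g^2 + 1) * X \<le> g^3 / d^2 * X^2" using quad_ge'[OF A0, of "g^2 + 1" X] Xa X1 by simp
  then have "(g^2 + 1) * X \<le> g^3 * X^2 / d^2" by (simp add: divide_inverse algebra_simps)
  then show ?thesis using k N X1 by (simp add: algebra_simps)
qed

lemma cond_b:
  fixes g d X a1 a2 Nr :: real
  assumes g: "1 < g" and d: "0 < d" and X1: "1 \<le> X"
    and Xb: "((1 + g) / d + 2) * d^2 / (g^3 - g) \<le> X"
    and a1: "0 \<le> a1" "a1 \<le> X / d + 1" and a2: "0 \<le> a2" "a2 \<le> g * X / d + 1"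
    and N: "g^3 * X^2 / d^2 - 1 < Nr"
  shows "a1 * a2 \<le> Nr"
proof -
  have gg: "0 < g^3 - g"
  proof -
    have "1 < g^2" by (rule one_less_power[OF g]) simp
    moreover have "g^3 - g = g * (g^2 - 1)" by (simp add: power2_eq_square power3_eq_cube algebra_simps)
    ultimately show ?thesis using g by simp
  qed
  have "a1 * a2 \<le> (X / d + 1) * (g * X / d + 1)" using a1 a2 by (intro mult_mono) auto
  also have "\<dots> = g * X^2 / d^2 + (1 + g) / d * X + 1" using d by (simp add: field_simps power2_eq_square)
  also have "\<dots> \<le> g * X^2 / d^2 + ((1 + g) / d + 2) * X - 1"
    using X1 by (simp add: algebra_simps)
  also have "((1 + g) / d + 2) * X \<le> (g^3 - g) / d^2 * X^2"
  proof -
    have A0: "0 < (g^3 - g) / d^2" using gg d by simp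
    have "((1 + g) / d + 2) / ((g^3 - g) / d^2) = ((1 + g) / d + 2) * d^2 / (g^3 - g)"
      using gg d by (simp add: field_simps)
    then show ?thesis using quad_ge'[OF A0, of "(1 + g) / d + 2" X] Xb X1 by simp
  qed
  finally have "a1 * a2 \<le> g * X^2 / d^2 + (g^3 - g) / d^2 * X^2 - 1" by simp
  also have "\<dots> = g^3 * X^2 / d^2 - 1" using d by (simp add: field_simps)
  finally show ?thesis using N by simp
qed

lemma cond_c:
  fixes g d X a1 a2 Nr c :: real
  assumes g: "1 < g" and d: "0 < d" and X1: "1 \<le> X" and c: "1 \<le> c"
    and a1: "0 \<le> a1" "a1 \<le> g * X / d + 1" and a2: "0 \<le> a2" "a2 \<le> g^2 * X / d + 1"
    and N: "c * g^3 * X^2 / d^2 - 1 < Nr"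
  shows "a1 * a2 - Nr \<le> ((g + g^2) / d + 2) * X"
proof -
  have "a1 * a2 \<le> (g * X / d + 1) * (g^2 * X / d + 1)" using a1 a2 by (intro mult_mono) auto
  also have "\<dots> = g^3 * X^2 / d^2 + (g + g^2) / d * X + 1" using d by (simp add: field_simps power2_eq_square power3_eq_cube)
  finally have h: "a1 * a2 \<le> g^3 * X^2 / d^2 + (g + g^2) / d * X + 1" .
  have "g^3 * X^2 / d^2 \<le> c * g^3 * X^2 / d^2" using c g d
    by (simp add: divide_right_mono mult_le_cancel_right1)
  then show ?thesis using h N X1 by (simp add: algebra_simps)
qed

lemma cond_d:
  fixes g d X b1 b3 p A :: real
  assumes g: "1 < g" and d: "0 < d" and X1: "1 \<le> X" and p: "0 \<le> p" "p \<le> g^2"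
    and Xd: "2 * d / g^3 < X"
    and b1: "g * X / d - 1 \<le> b1" and b3: "g^3 * X / d - 1 \<le> b3"
    and A: "A \<le> p * g^4 * X^2 / d^2"
  shows "A < (p * b1 + p + 2) * b3"
proof -
  have g3: "0 < g^3" using g by simp
  have "2 * d < g^3 * X" using Xd g3 by (simp add: divide_less_eq mult.commute)
  then have t: "2 < g^3 * X / d" using d by (simp add: less_divide_eq)
  have f1: "0 \<le> p * g * X / d + 2" using p g d X1 by simp
  have f2: "0 \<le> g^3 * X / d - 1" using t by simp
  have "p * (g * X / d - 1) \<le> p * b1" using p b1 by (intro mult_left_mono) auto
  then have s1: "p * g * X / d + 2 \<le> p * b1 + p + 2" by (simp add: algebra_simps)
  have "(p * g * X / d + 2) * (g^3 * X / d - 1) \<le> (p * b1 + p + 2) * b3"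
    using s1 b3 f1 f2 by (intro mult_mono) auto
  moreover have "(p * g * X / d + 2) * (g^3 * X / d - 1)
      = p * g^4 * X^2 / d^2 + (2 * g^3 - p * g) * X / d - 2"
    using d by (simp add: field_simps power2_eq_square power3_eq_cube power4_eq_xxxx)
  moreover have "g^3 * X / d \<le> (2 * g^3 - p * g) * X / d"
  proof -
    have "p * g \<le> g^2 * g" using p g by (intro mult_right_mono) auto
    then have "g^3 \<le> 2 * g^3 - p * g" by (simp add: power2_eq_square power3_eq_cube)
    then show ?thesis using X1 d by (intro divide_right_mono mult_right_mono) auto
  qed
  ultimately show ?thesis using A t by linarith
qed

lemma cond_e:
  fixes g d X b2 b4 p A :: real
  assumes g: "1 < g" and d: "0 < d" and X1: "1 \<le> X" and p: "1 \<le> p"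
    and Xe: "d * (g^2 + g^4) / (g^6 - g^4) \<le> X" and Xe2: "d / g^2 \<le> X"
    and b2: "g^2 * X / d - 1 \<le> b2" and b4: "g^4 * X / d - 1 \<le> b4"
    and A: "A \<le> p * g^4 * X^2 / d^2"
  shows "A < p * b2 * b4"
proof -
  have g2: "0 < g^2" using g by simp
  have g64: "0 < g^6 - g^4"
  proof -
    have "g^4 * 1 < g^4 * g^2" using g by (intro mult_strict_left_mono) (auto simp: one_less_power)
    then show ?thesis by (simp add: power_add[symmetric])
  qed
  have "d \<le> g^2 * X" using Xe2 g2 by (simp add: divide_le_eq mult.commute)
  then have f1: "0 \<le> g^2 * X / d - 1" using d by (simp add: le_divide_eq)
  have f2: "0 \<le> g^4 * X / d - 1"
  proof -
    have "g^2 * X \<le> g^4 * X" using g X1 by (intro mult_right_mono power_increasing) auto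
    then have "g^2 * X / d \<le> g^4 * X / d" using d by (simp add: divide_right_mono)
    then show ?thesis using f1 by simp
  qed
  have "(g^2 * X / d - 1) * (g^4 * X / d - 1) \<le> b2 * b4" using b2 b4 f1 f2 by (intro mult_mono) auto
  moreover have "(g^2 * X / d - 1) * (g^4 * X / d - 1) = g^6 * X^2 / d^2 - (g^2 + g^4) / d * X + 1"
    using d by (simp add: field_simps power2_eq_square) (simp add: power_add[symmetric] numeral_eq_Suc power_Suc)
  moreover have "(g^2 + g^4) / d * X \<le> (g^6 - g^4) / d^2 * X^2"
  proof -
    have A0: "0 < (g^6 - g^4) / d^2" using g64 d by simp
    have "((g^2 + g^4) / d) / ((g^6 - g^4) / d^2) = d * (g^2 + g^4) / (g^6 - g^4)"
      using g64 d by (simp add: field_simps power2_eq_square)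
    then show ?thesis using quad_ge'[OF A0, of "(g^2 + g^4) / d" X] Xe X1 by simp
  qed
  moreover have "g^6 * X^2 / d^2 - (g^6 - g^4) / d^2 * X^2 = g^4 * X^2 / d^2"
    by (simp add: divide_inverse algebra_simps)
  ultimately have "g^4 * X^2 / d^2 < b2 * b4" by linarith
  then have "p * (g^4 * X^2 / d^2) < p * (b2 * b4)" using p by (intro mult_strict_left_mono) auto
  then show ?thesis using A by (simp add: mult.assoc)
qed

lemma count_est:
  assumes al: "1 \<le> al" and p1: "1 \<le> p" and pal: "p \<le> al^2"
    and c1: "1 \<le> c" and cp: "c \<le> real p * gam al / real al"
  shows "\<exists>C X0. \<forall>n. 1 \<le> n \<longrightarrow> X0 \<le> gam al ^ n \<longrightarrow>
    \<bar>real (card (Sp al p \<inter> {1..ncr al c (Suc n)}))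
      - (1 - real p / (real al * gam al))^2 / (2 * (gam al - lam al)^2) * gam al ^ (2*n+3)\<bar>
    \<le> C * gam al ^ n"
proof -
  define g where "g = gam al"
  define l where "l = lam al"
  define d where "d = g - l"
  define Kc where "Kc = (1 - real p / (real al * g))^2 / (2 * d^2)"
  note f = gl_facts[OF al, folded g_def l_def]
  have g1: "1 < g" using f(7) .
  have d0: "0 < d" using f(10) by (simp add: d_def)
  have alpos: "0 < real al" using al by simp
  obtain Cm where Cm: "\<forall>n. \<bar>(\<Sum>j\<in>{1..n}. real (card (Dset al p j))) - Kc * g^(2*n+3)\<bar> \<le> Cm * g^n"
    using main_sum[OF al pal] unfolding Kc_def d_def g_def l_def by blast
  define X0 where "X0 = Max {1, (g^2 + 1) * d^2 / g^3, ((1 + g) / d + 2) * d^2 / (g^3 - g),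
      2 * d / g^3 + 1, d * (g^2 + g^4) / (g^6 - g^4), d / g^2}"
  define C2 where "C2 = real al + (real p + 1) * g^2 + g^2 / (g - 1) + ((g + g^2) / d + 2)"
  have X0s: "1 \<le> X0" "(g^2 + 1) * d^2 / g^3 \<le> X0" "((1 + g) / d + 2) * d^2 / (g^3 - g) \<le> X0"
      "2 * d / g^3 + 1 \<le> X0" "d * (g^2 + g^4) / (g^6 - g^4) \<le> X0" "d / g^2 \<le> X0"
    unfolding X0_def by (auto intro: Max_ge)
  have pg: "real p \<le> g^2"
  proof -
    have "real p \<le> real al ^ 2" using pal by (metis of_nat_le_iff of_nat_power)
    also have "\<dots> \<le> g^2" using f(6) alpos by (intro power_mono) auto
    finally show ?thesis .
  qed
  have "\<forall>n. 1 \<le> n \<longrightarrow> X0 \<le> g ^ n \<longrightarrow>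
    \<bar>real (card (Sp al p \<inter> {1..ncr al c (Suc n)})) - Kc * g^(2*n+3)\<bar> \<le> (Cm + C2) * g^n"
  proof (intro allI impI)
    fix n :: nat assume n1: "1 \<le> n" and Xn: "X0 \<le> g^n"
    define X where "X = g^n"
    define N where "N = ncr al c (Suc n)"
    have X1: "1 \<le> X" using Xn X0s(1) by (simp add: X_def)
    have pw5: "g^(2 * Suc n + 1) = g^3 * X^2"
    proof -
      have "2 * Suc n + 1 = 3 + 2 * n" by simp
      then have "g^(2 * Suc n + 1) = g^3 * g^(2*n)" by (simp only: power_add)
      also have "g^(2*n) = X^2" by (simp add: X_def power_mult[symmetric] mult.commute)
      finally show ?thesis .
    qed
    have pw1: "g^(n+1) = g * X" unfolding X_def power_add power_one_right by (rule mult.commute)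
    have pw2: "g^(n+2) = g^2 * X" unfolding X_def power_add by (rule mult.commute)
    have pw3: "g^(n+3) = g^3 * X" unfolding X_def power_add by (rule mult.commute)
    have pw4: "g^(n+4) = g^4 * X" unfolding X_def power_add by (rule mult.commute)
    note pw = pw1 pw2 pw3 pw4 pw5
    have Nb1: "real N \<le> c / d^2 * (g^3 * X^2)"
      using N_bounds(1)[OF al, of c "Suc n"] c1 pw(5) by (simp add: N_def d_def g_def l_def)
    have Nb2: "c / d^2 * (g^3 * X^2) - 1 < real N"
      using N_bounds(2)[OF al, of c "Suc n"] c1 pw(5) by (simp add: N_def d_def g_def l_def)
    have gX: "0 \<le> g^3 * X^2 / d^2" using g1 d0 by simp
    have Nlow: "g^3 * X^2 / d^2 - 1 < real N"
    proof -
      have "1 * (g^3 * X^2 / d^2) \<le> c * (g^3 * X^2 / d^2)" using c1 gX by (intro mult_right_mono) auto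
      then have "g^3 * X^2 / d^2 \<le> c * (g^3 * X^2 / d^2)" by simp
      then show ?thesis using Nb2 by (simp add: divide_inverse algebra_simps)
    qed
    have Nlow': "c * g^3 * X^2 / d^2 - 1 < real N" using Nb2 by (simp add: divide_inverse algebra_simps)
    have alN: "real al * real N \<le> real p * g^4 * X^2 / d^2"
    proof -
      have "real al * c \<le> real p * g" using cp alpos by (simp add: field_simps g_def)
      have "real al * real N \<le> real al * (c / d^2 * (g^3 * X^2))" using Nb1 alpos by (intro mult_left_mono) auto
      also have "\<dots> = (real al * c) * (g^3 * X^2 / d^2)" by (simp add: divide_inverse algebra_simps)
      also have "\<dots> \<le> (real p * g) * (g^3 * X^2 / d^2)"
        using \<open>real al * c \<le> real p * g\<close> gX by (intro mult_right_mono) auto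
      also have "\<dots> = real p * g^4 * X^2 / d^2" by (simp add: power4_eq_xxxx power3_eq_cube)
      finally show ?thesis .
    qed
    have Ghi: "real (G al k) \<le> g^k / d + 1" for k using G_hi[OF al, of k] by (simp add: g_def d_def l_def)
    have Glo: "g^k / d - 1 \<le> real (G al k)" for k using G_lo[OF al, of k] by (simp add: g_def d_def l_def)
    have Gpow: "real (G al k) \<le> g^k" for k using G_le_pow[OF al, of k] by (simp add: g_def)
    have XX: "X0 \<le> X" using Xn by (simp add: X_def)
    have hA: "n + 1 \<le> N"
    proof -
      have a: "n + 1 \<le> G al (Suc (n + 1))" by (rule G_ge_lin[OF al])
      have "real (n + 1) \<le> g^(Suc (n+1))" using order_trans[OF of_nat_mono[OF a] Gpow] .
      moreover have "Suc (n+1) = n + 2" by simp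
      ultimately have k: "real (n + 1) \<le> g^2 * X" using pw2 by simp
      have "real (n + 1) < real N"
        by (rule cond_a[OF g1 d0 X1 order_trans[OF X0s(2) XX] k Nlow])
      then show ?thesis by simp
    qed
    have hB: "G al n * G al (Suc n) \<le> N"
    proof -
      have a1: "real (G al n) \<le> X / d + 1" using Ghi[of n] by (simp add: X_def)
      have a2: "real (G al (Suc n)) \<le> g * X / d + 1" using Ghi[of "Suc n"] unfolding power_Suc X_def[symmetric] .
      have "real (G al n) * real (G al (Suc n)) \<le> real N"
        by (rule cond_b[OF g1 d0 X1 order_trans[OF X0s(3) XX] _ a1 _ a2 Nlow]) auto
      then show ?thesis by (metis of_nat_le_iff of_nat_mult)
    qed
    have hD: "al * N < (p * G al (Suc n) + p + 2) * G al (n + 3)"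
    proof -
      have Xd: "2 * d / g^3 < X" using X0s(4) XX by linarith
      have b1: "g * X / d - 1 \<le> real (G al (Suc n))" using Glo[of "Suc n"] unfolding power_Suc X_def[symmetric] .
      have b3: "g^3 * X / d - 1 \<le> real (G al (n + 3))" using Glo[of "n+3"] unfolding pw3 .
      have "real al * real N < (real p * real (G al (Suc n)) + real p + 2) * real (G al (n + 3))"
        by (rule cond_d[OF g1 d0 X1 _ pg Xd b1 b3 alN]) simp
      then show ?thesis by (metis of_nat_less_iff of_nat_mult of_nat_add of_nat_numeral)
    qed
    have hE: "al * N < p * G al (n + 2) * G al (n + 4)"
    proof -
      have b2: "g^2 * X / d - 1 \<le> real (G al (n + 2))" using Glo[of "n+2"] unfolding pw2 .
      have b4: "g^4 * X / d - 1 \<le> real (G al (n + 4))" using Glo[of "n+4"] unfolding pw4 .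
      have p1': "1 \<le> real p" using p1 by simp
      have "real al * real N < real p * real (G al (n + 2)) * real (G al (n + 4))"
        by (rule cond_e[OF g1 d0 X1 p1' order_trans[OF X0s(5) XX] order_trans[OF X0s(6) XX] b2 b4 alN])
      then show ?thesis by (metis of_nat_less_iff of_nat_mult)
    qed
    note cb = comb_bounds[OF al n1 hA hB hD hE]
    define ST where "ST = (\<Sum>j\<in>{1..n}. real (card (Dset al p j)))"
    define cnt where "cnt = real (card (Sp al p \<inter> {1..N}))"
    have up: "cnt \<le> real al + ST + (real p + 1) * real (G al (n + 2))"
      using cb(2) unfolding cnt_def ST_def by (metis of_nat_le_iff of_nat_add of_nat_mult of_nat_sum of_nat_1)
    have lo: "ST \<le> cnt + (\<Sum>j\<in>{1..n}. real (G al (Suc j))) + real (G al (Suc n) * G al (n + 2) - N)"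
      using cb(1) unfolding cnt_def ST_def by (metis of_nat_le_iff of_nat_add of_nat_sum)
    have sG: "(\<Sum>j\<in>{1..n}. real (G al (Suc j))) \<le> g^2 / (g - 1) * X"
    proof -
      have "(\<Sum>j\<in>{1..n}. real (G al (Suc j))) \<le> (\<Sum>j\<in>{1..n}. g * g^j)"
      proof (rule sum_mono)
        fix j show "real (G al (Suc j)) \<le> g * g^j" using Gpow[of "Suc j"] unfolding power_Suc .
      qed
      also have "\<dots> = g * (\<Sum>j\<in>{1..n}. g^j)" by (simp add: sum_distrib_left)
      also have "(\<Sum>j\<in>{1..n}. g^j) = (g^(n+1) - g) / (g - 1)"
        using geo1[of g n] g1 by (simp add: field_simps)
      also have "g * ((g^(n+1) - g) / (g - 1)) \<le> g * (g^(n+1) / (g - 1))"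
        using g1 by (intro mult_left_mono divide_right_mono) auto
      also have "\<dots> = g^2 / (g - 1) * X" using pw(1) by (simp add: power2_eq_square)
      finally show ?thesis .
    qed
    have sM: "real (G al (Suc n) * G al (n + 2) - N) \<le> ((g + g^2) / d + 2) * X"
    proof (cases "G al (Suc n) * G al (n + 2) \<le> N")
      case True
      then show ?thesis using X1 g1 d0 by simp
    next
      case False
      then have "real (G al (Suc n) * G al (n + 2) - N) = real (G al (Suc n)) * real (G al (n + 2)) - real N"
        by (simp add: of_nat_diff)
      also have "\<dots> \<le> ((g + g^2) / d + 2) * X"
      proof -
        have a1: "real (G al (Suc n)) \<le> g * X / d + 1" using Ghi[of "Suc n"] unfolding power_Suc X_def[symmetric] .
        have a2: "real (G al (n + 2)) \<le> g^2 * X / d + 1" using Ghi[of "n+2"] unfolding pw2 .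
        show ?thesis by (rule cond_c[OF g1 d0 X1 c1 _ a1 _ a2 Nlow']) auto
      qed
      finally show ?thesis .
    qed
    have sP: "(real p + 1) * real (G al (n + 2)) \<le> (real p + 1) * g^2 * X"
      using Gpow[of "n+2"] pw(2) by (simp add: mult_left_mono)
    have aX: "real al \<le> real al * X" using X1 alpos by simp
    have err: "\<bar>cnt - ST\<bar> \<le> C2 * X"
    proof -
      have "cnt - ST \<le> C2 * X"
      proof -
        have "C2 * X = real al * X + (real p + 1) * g^2 * X + g^2 / (g - 1) * X + ((g + g^2) / d + 2) * X"
          unfolding C2_def by (simp add: algebra_simps)
        moreover have "0 \<le> g^2 / (g - 1) * X" using g1 X1 by simp
        moreover have "0 \<le> ((g + g^2) / d + 2) * X" using g1 X1 d0 by simp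
        ultimately show ?thesis using up sP aX by linarith
      qed
      moreover have "ST - cnt \<le> C2 * X"
      proof -
        have "C2 * X = real al * X + (real p + 1) * g^2 * X + g^2 / (g - 1) * X + ((g + g^2) / d + 2) * X"
          unfolding C2_def by (simp add: algebra_simps)
        moreover have "0 \<le> (real p + 1) * g^2 * X" using X1 by simp
        ultimately show ?thesis using lo sG sM aX alpos X1 by linarith
      qed
      ultimately show ?thesis by linarith
    qed
    have "\<bar>cnt - Kc * g^(2*n+3)\<bar> \<le> \<bar>cnt - ST\<bar> + \<bar>ST - Kc * g^(2*n+3)\<bar>" by linarith
    also have "\<dots> \<le> C2 * X + Cm * X" using err Cm unfolding ST_def X_def by (intro add_mono) auto
    finally show "\<bar>real (card (Sp al p \<inter> {1..ncr al c (Suc n)})) - Kc * g^(2*n+3)\<bar> \<le> (Cm + C2) * g^n"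
      unfolding cnt_def N_def X_def by (simp add: algebra_simps)
  qed
  then show ?thesis unfolding Kc_def d_def g_def l_def by blast
qed

lemma ratio_bound:
  fixes cnt Nr Z K c C X g D :: real
  assumes c1: "1 \<le> c" and K0: "0 \<le> K" and D0: "0 < D" and g1: "1 < g" and X1: "1 \<le> X"
    and Z: "Z = g^3 * X^2"
    and cnt: "\<bar>cnt - K * Z\<bar> \<le> C * X"
    and N1: "c * Z / D - 1 < Nr" and N2: "Nr \<le> c * Z / D"
    and Y2: "2 \<le> c * Z / D"
  shows "\<bar>cnt / Nr - K * D / c\<bar> \<le> 2 * D * (c * C + K * D) / (c^2 * g^2) * (1 / (g * X))"
proof -
  have cpos: "0 < c" using c1 by simp
  have X0: "0 < X" using X1 by simp
  have "0 \<le> C * X" using cnt abs_ge_zero order_trans by blast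
  then have C0: "0 \<le> C" using X0 by (simp add: zero_le_mult_iff)
  have Zpos: "0 < Z" using Z g1 X0 by simp
  have NY: "c * Z / (2 * D) \<le> Nr" using N1 Y2 by (simp add: field_simps)
  have "0 < c * Z / (2 * D)" using cpos Zpos D0 by simp
  then have Npos: "0 < Nr" using NY by linarith
  have eq: "cnt / Nr - K * D / c = (c * (cnt - K * Z) + K * D * (c * Z / D - Nr)) / (c * Nr)"
    using Npos cpos D0 by (simp add: field_simps)
  have num: "\<bar>c * (cnt - K * Z) + K * D * (c * Z / D - Nr)\<bar> \<le> (c * C + K * D) * X"
  proof -
    have "\<bar>c * (cnt - K * Z)\<bar> \<le> c * (C * X)" using cnt cpos by (simp add: abs_mult)
    moreover have "\<bar>K * D * (c * Z / D - Nr)\<bar> \<le> K * D * X"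
    proof -
      have "\<bar>c * Z / D - Nr\<bar> \<le> X" using N1 N2 X1 by simp
      then show ?thesis using K0 D0 by (simp add: abs_mult mult_left_mono)
    qed
    moreover have "\<bar>c * (cnt - K * Z) + K * D * (c * Z / D - Nr)\<bar> \<le> \<bar>c * (cnt - K * Z)\<bar> + \<bar>K * D * (c * Z / D - Nr)\<bar>"
      by (rule abs_triangle_ineq)
    ultimately show ?thesis by (simp add: algebra_simps)
  qed
  have den: "c * (c * Z / (2 * D)) \<le> c * Nr" using NY cpos by (intro mult_left_mono) auto
  have "\<bar>cnt / Nr - K * D / c\<bar> = \<bar>c * (cnt - K * Z) + K * D * (c * Z / D - Nr)\<bar> / (c * Nr)"
    unfolding eq using Npos cpos by (simp add: abs_div)
  also have "\<dots> \<le> (c * C + K * D) * X / (c * (c * Z / (2 * D)))"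
    using num den Npos cpos Zpos D0 C0 K0
    by (intro frac_le) (auto intro!: mult_nonneg_nonneg divide_pos_pos mult_pos_pos)
  also have "\<dots> = 2 * D * (c * C + K * D) / (c^2 * g^2) * (1 / (g * X))"
    unfolding Z using cpos D0 g1 X0 by (simp add: field_simps power2_eq_square power3_eq_cube)
  finally show ?thesis .
qed

lemma part1:
  assumes al: "1 \<le> al" and p1: "1 \<le> p" and pal: "p \<le> al^2"
    and c1: "1 \<le> c" and cp: "c \<le> real p * gam al / real al"
  shows "(\<lambda>r. real (card (Sp al p \<inter> {1..ncr al c r})) / real (ncr al c r)
                 - (1/2) * (1/c) * (1 - real p / (real al * gam al))^2)
            \<in> O(\<lambda>r. 1 / gam al ^ r)"
proof -
  define g where "g = gam al"
  define l where "l = lam al"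
  define d where "d = g - l"
  define K where "K = (1 - real p / (real al * g))^2 / (2 * d^2)"
  note f = gl_facts[OF al, folded g_def l_def]
  have g1: "1 < g" using f(7) .
  have d0: "0 < d" using f(10) by (simp add: d_def)
  have cpos: "0 < c" using c1 by simp
  obtain C X0 where CX: "\<forall>n. 1 \<le> n \<longrightarrow> X0 \<le> g ^ n \<longrightarrow>
      \<bar>real (card (Sp al p \<inter> {1..ncr al c (Suc n)})) - K * g ^ (2*n+3)\<bar> \<le> C * g ^ n"
    using count_est[OF al p1 pal c1 cp] unfolding K_def d_def g_def l_def by blast
  define Xb where "Xb = max X0 (max 1 (2 * d^2 / g^3))"
  obtain n0 where n0: "Xb < g ^ n0" using real_arch_pow[OF g1] by blast
  define n1 where "n1 = max n0 1"
  define C' where "C' = 2 * d^2 * (c * C + K * d^2) / (c^2 * g^2)"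
  have T: "(1/2) * (1/c) * (1 - real p / (real al * g))^2 = K * d^2 / c"
    unfolding K_def using d0 cpos by (simp add: field_simps)
  have K0: "0 \<le> K" unfolding K_def by simp
  have ev: "\<forall>r\<ge>Suc n1. \<bar>real (card (Sp al p \<inter> {1..ncr al c r})) / real (ncr al c r)
                 - (1/2) * (1/c) * (1 - real p / (real al * g))^2\<bar> \<le> C' * (1 / g ^ r)"
  proof (intro allI impI)
    fix r assume r: "Suc n1 \<le> r"
    define n where "n = r - 1"
    have rn: "r = Suc n" using r by (simp add: n_def)
    have n1: "1 \<le> n" and nn0: "n0 \<le> n" using r by (auto simp: n_def n1_def)
    define X where "X = g ^ n"
    have "g ^ n0 \<le> g ^ n" using nn0 g1 by (intro power_increasing) auto
    then have XXb: "Xb \<le> X" using n0 by (simp add: X_def)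
    have X1: "1 \<le> X" and XX0: "X0 \<le> X" and X2: "2 * d^2 / g^3 \<le> X" using XXb by (auto simp: Xb_def)
    have Z: "g^(2*n+3) = g^3 * X^2"
    proof -
      have "2*n+3 = 3 + 2*n" by simp
      then have "g^(2*n+3) = g^3 * g^(2*n)" by (simp only: power_add)
      also have "g^(2*n) = X^2" by (simp add: X_def power_mult[symmetric] mult.commute)
      finally show ?thesis .
    qed
    have cnt: "\<bar>real (card (Sp al p \<inter> {1..ncr al c r})) - K * g^(2*n+3)\<bar> \<le> C * X"
      using CX n1 XX0 unfolding rn X_def by blast
    have e2: "2 * Suc n + 1 = 2*n+3" by simp
    have N1: "c * g^(2*n+3) / d^2 - 1 < real (ncr al c r)"
      using N_bounds(2)[OF al, of c r] cpos unfolding rn e2 by (simp add: g_def l_def d_def)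
    have N2: "real (ncr al c r) \<le> c * g^(2*n+3) / d^2"
      using N_bounds(1)[OF al, of c r] cpos unfolding rn e2 by (simp add: g_def l_def d_def)
    have Y2: "2 \<le> c * g^(2*n+3) / d^2"
    proof -
      have g3: "0 < g^3" using g1 by simp
      have "2 * d^2 \<le> g^3 * X" using X2 g3 by (simp add: divide_le_eq mult.commute)
      also have "g^3 * X \<le> g^3 * X^2" using X1 g3 by (simp add: power2_eq_square)
      also have "\<dots> \<le> c * (g^3 * X^2)"
      proof -
        have "1 * (g^3 * X^2) \<le> c * (g^3 * X^2)" using c1 g3 X1 by (intro mult_right_mono) auto
        then show ?thesis by simp
      qed
      finally have "2 * d^2 \<le> c * g^(2*n+3)" unfolding Z .
      then show ?thesis using d0 by (simp add: le_divide_eq)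
    qed
    have d20: "0 < d^2" using d0 by simp
    have rb: "\<bar>real (card (Sp al p \<inter> {1..ncr al c r})) / real (ncr al c r) - K * d^2 / c\<bar>
        \<le> C' * (1 / (g * X))"
      using ratio_bound[OF c1 K0 d20 g1 X1 Z cnt] N1 N2 Y2 unfolding C'_def by simp
    have "g * X = g ^ r" by (simp add: rn X_def)
    then show "\<bar>real (card (Sp al p \<inter> {1..ncr al c r})) / real (ncr al c r)
                 - (1/2) * (1/c) * (1 - real p / (real al * g))^2\<bar> \<le> C' * (1 / g ^ r)"
      using rb T by simp
  qed
  have "eventually (\<lambda>r. norm (real (card (Sp al p \<inter> {1..ncr al c r})) / real (ncr al c r)
                 - (1/2) * (1/c) * (1 - real p / (real al * g))^2) \<le> C' * norm (1 / g ^ r)) sequentially"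
    unfolding eventually_sequentially using ev g1 by auto
  then show ?thesis unfolding g_def by (intro bigoI)
qed

theorem corollary1p5:
  fixes al p :: nat and c :: real
  assumes "1 \<le> al"
  shows "(1 \<le> p \<and> p \<le> al ^ 2 \<and> 1 \<le> c \<and> c \<le> real p * gam al / real al \<longrightarrow>
          (\<lambda>r. real (card (Sp al p \<inter> {1..ncr al c r})) / real (ncr al c r)
                 - (1/2) * (1/c) * (1 - real p / (real al * gam al))^2)
            \<in> O(\<lambda>r. 1 / gam al ^ r))
       \<and> (1 \<le> c \<and> c \<le> real al * gam al \<longrightarrow>
          (\<lambda>r. real (card (Sp al (al ^ 2) \<inter> {1..ncr al c r})) / real (ncr al c r)
                 - (1/2) * (1/c) * (1 / gam al ^ 4))
            \<in> O(\<lambda>r. 1 / gam al ^ r))"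
proof (intro conjI impI)
  assume h: "1 \<le> p \<and> p \<le> al ^ 2 \<and> 1 \<le> c \<and> c \<le> real p * gam al / real al"
  then show "(\<lambda>r. real (card (Sp al p \<inter> {1..ncr al c r})) / real (ncr al c r)
                 - (1/2) * (1/c) * (1 - real p / (real al * gam al))^2)
            \<in> O(\<lambda>r. 1 / gam al ^ r)"
    using part1[OF assms] by blast
next
  assume h: "1 \<le> c \<and> c \<le> real al * gam al"
  note f = gl_facts[OF assms]
  have alpos: "0 < real al" using assms by simp
  have gpos: "0 < gam al" using f(7) by simp
  have p1: "1 \<le> al ^ 2" using assms by simp
  have cp: "c \<le> real (al ^ 2) * gam al / real al"
    using h alpos by (simp add: power2_eq_square)
  have "1 - real (al ^ 2) / (real al * gam al) = 1 / gam al ^ 2"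
  proof -
    have "1 - real (al ^ 2) / (real al * gam al) = (gam al - real al) / gam al"
      using alpos gpos by (simp add: field_simps power2_eq_square)
    also have "gam al - real al = - lam al" using f(2) by linarith
    also have "- lam al = 1 / gam al" using f(3) gpos by (simp add: field_simps)
    finally show ?thesis by (simp add: power2_eq_square)
  qed
  then have e: "(1 - real (al ^ 2) / (real al * gam al))^2 = 1 / gam al ^ 4"
    by (simp add: power_mult[symmetric] power_one_over)
  show "(\<lambda>r. real (card (Sp al (al ^ 2) \<inter> {1..ncr al c r})) / real (ncr al c r)
                 - (1/2) * (1/c) * (1 / gam al ^ 4))
            \<in> O(\<lambda>r. 1 / gam al ^ r)"
    using part1[OF assms p1 order_refl _ cp] h unfolding e by blast
qed


end
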